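(* Let a domain $v$ be a triple $(\mu^{(v)}, f^{(v)}, g^{(v)})$ with $\mu^{(v)}$ a distribution on $\mathbb{R}^d$, $f^{(v)}:\mathbb{R}^d\to\mathbb{R}^{d'}$ and $g^{(v)}:\mathbb{R}^{d'}\to\mathcal{Y}$, and $h^{(v)}=g^{(v)}\circ f^{(v)}$. Let $u$ be the unseen domain and $s=1,\dots,S$ the seen domains. For $h=g\circ f$ define $R^{(v)}(h):=\mathbb{E}_{\bm{x}\sim\mu^{(v)}}[\ell(h(\bm{x}),h^{(v)}(\bm{x}))]$. Assume (i) $\ell$ is non-negative, symmetric, bounded by a finite positive number $L$, and satisfies the triangle inequality; (ii) $f$ is invertible when restricted to the data manifold (the support of the input distributions); and (iii) the pushforwards $f_{\#}\mu^{(s)}$, $s=1,\dots,S$, and $f_{\#}\mu^{(u)}$ are all $(c_1,c_2)$-regular (absolutely continuous with differentiable density $p$ satisfying $\|\nabla\log_2 p(\bm{x})\|_2\le c_1\|\bm{x}\|_2+c_2$). Let $\lambda^{(1)},\dots,\lambda^{(S)}$ be convex weights, $\sigma^{(u,s)}:=\min\{\mathbb{E}_{\bm{x}\sim\mu^{(u)}}[\ell(h^{(u)}(\bm{x}),h^{(s)}(\bm{x}))],\ \mathbb{E}_{\bm{x}\sim\mu^{(s)}}[\ell(h^{(u)}(\bm{x}),h^{(s)}(\bm{x}))]\}$, and $C=\max_s\sqrt{c_1(\sqrt{\mathbb{E}_{\bm{x}\sim\mu^{(u)}}[\|f(\bm{x})\|^2]}+\sqrt{\mathbb{E}_{\bm{x}\sim\mu^{(s)}}[\|f(\bm{x})\|^2]})+2c_2}$.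 Then for an arbitrary pushforward distribution $f_{\#}\mu$ and any such hypothesis $h=g\circ f$, \[ R^{(u)}(h)\le\sum_{s=1}^S\lambda^{(s)}R^{(s)}(h)+LC\Big[\sum_{s=1}^S\lambda^{(s)}\mathsf{W}_2^2(f_{\#}\mu,f_{\#}\mu^{(s)})\Big]^{1/4}+LC\big[\mathsf{W}_2^2(f_{\#}\mu^{(u)},f_{\#}\mu)\big]^{1/4}+\sum_{s=1}^S\lambda^{(s)}\sigma^{(u,s)}, \] where $\mathsf{W}_2$ is the Wasserstein-2 distance.
   Context: Decomposes the intractable unseen-domain Wasserstein term into an optimizable term (minimized by the Wasserstein-2 barycenter of the seen-domain pushforwards) and a term depending only on the unseen domain. *)

theory Defs
  imports "HOL-Probability.Probability"
begin

definition pushforward :: "('a \<Rightarrow> 'b::topological_space) \<Rightarrow> 'a measure \<Rightarrow> 'b measure" where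
  "pushforward f M = distr M borel f"

definition msupport :: "'a::topological_space measure \<Rightarrow> 'a set" where
  "msupport M = {x. \<forall>U. open U \<and> x \<in> U \<longrightarrow> emeasure M U > 0}"

definition regular :: "real \<Rightarrow> real \<Rightarrow> 'b::euclidean_space measure \<Rightarrow> bool" where
  "regular c1 c2 P \<longleftrightarrow>
     (\<exists>p :: 'b \<Rightarrow> real.
        p \<in> borel_measurable borel \<and> (\<forall>x. p x > 0) \<and> (\<forall>x. p differentiable (at x)) \<and>
        P = density lborel (\<lambda>x. ennreal (p x)) \<and>
        (\<forall>x. \<exists>grad. ((\<lambda>y. log 2 (p y)) has_derivative (\<lambda>v. grad \<bullet> v)) (at x) \<and>
                    norm grad \<le> c1 * norm x + c2))"

definition couplings :: "'b::euclidean_space measure \<Rightarrow> 'b measure \<Rightarrow> ('b \<times> 'b) measure set" where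
  "couplings P Q = {\<gamma>. prob_space \<gamma> \<and> sets \<gamma> = sets (borel \<Otimes>\<^sub>M borel) \<and>
                        distr \<gamma> borel fst = P \<and> distr \<gamma> borel snd = Q}"

text \<open>Squared Wasserstein-2 distance (real-valued; finite under the finite-second-moment
  hypotheses of the theorem).\<close>
definition W2sq :: "'b::euclidean_space measure \<Rightarrow> 'b measure \<Rightarrow> real" where
  "W2sq P Q = enn2real (\<Sqinter>\<gamma>\<in>couplings P Q. \<integral>\<^sup>+ z. ennreal ((norm (fst z - snd z))\<^sup>2) \<partial>\<gamma>)"

definition risk :: "('y \<Rightarrow> 'y \<Rightarrow> real) \<Rightarrow> 'a measure \<Rightarrow> ('a \<Rightarrow> 'y) \<Rightarrow> ('a \<Rightarrow> 'y) \<Rightarrow> real" where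
  "risk loss M hv h = (\<integral>x. loss (h x) (hv x) \<partial>M)"

end

theory Submission
  imports Defs
begin
lemma msupport_compl: "- msupport M = \<Union>{U. open U \<and> emeasure M U = 0}"
  unfolding msupport_def by (auto simp: not_less)

lemma msupport_closed: "closed (msupport M)"
proof -
  have "open (- msupport M)" unfolding msupport_compl by auto
  then show ?thesis by (simp add: closed_def)
qed

lemma msupport_null:
  fixes M :: "'a::second_countable_topology measure"
  assumes sM: "sets M = sets borel"
  shows "- msupport M \<in> null_sets M"
proof -
  obtain F where F: "F \<subseteq> {U. open U \<and> emeasure M U = 0}" "countable F"
      "\<Union>F = \<Union>{U. open U \<and> emeasure M U = 0}"
    using Lindelof[of "{U. open U \<and> emeasure M U = 0}"] by blast
  have "(\<Union>U\<in>F. U) \<in> null_sets M"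
    apply (rule null_sets_UN')
    using F by (auto simp: null_sets_def sM)
  then show ?thesis using F(3) msupport_compl[of M] by simp
qed

lemma AE_msupport:
  fixes M :: "'a::second_countable_topology measure"
  assumes sM: "sets M = sets borel"
  shows "AE x in M. x \<in> msupport M"
  by (rule AE_I'[OF msupport_null[OF sM]]) auto

lemma closed_inner:
  fixes M :: "'a::euclidean_space measure"
  assumes sM: "sets M = sets borel" and fin: "finite_measure M"
    and E: "E \<in> sets borel" and e: "e > 0"
  shows "\<exists>F. closed F \<and> F \<subseteq> E \<and> measure M (E - F) \<le> e"
proof -
  interpret finite_measure M by fact
  have sp: "space M = UNIV" using sets_eq_imp_space_eq[OF sM] by simp
  have cE: "- E \<in> sets borel" using E by auto
  have "emeasure M (- E) = (INF U \<in> {U. - E \<subseteq> U \<and> open U}. emeasure M U)"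
    by (rule outer_regular[OF sM _ cE]) (simp add: sp)
  moreover have "emeasure M (- E) < emeasure M (- E) + ennreal e"
    using e measure_nonneg[of M "-E"]
    by (simp add: emeasure_eq_measure ennreal_plus[symmetric] ennreal_less_iff del: ennreal_plus)
  ultimately have "(INF U \<in> {U. - E \<subseteq> U \<and> open U}. emeasure M U) < emeasure M (- E) + ennreal e"
    by simp
  then obtain U where U: "- E \<subseteq> U" "open U" "emeasure M U < emeasure M (- E) + ennreal e"
    unfolding INF_less_iff by blast
  have Us: "U \<in> sets M" using U(2) sM by auto
  have cEs: "- E \<in> sets M" using cE sM by auto
  have mU: "measure M U < measure M (- E) + e"
    using U(3) e measure_nonneg[of M U]
    by (simp add: emeasure_eq_measure ennreal_plus[symmetric] ennreal_less_iff del: ennreal_plus)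
  have "E - (- U) = U - (- E)" by auto
  moreover have "measure M (U - (- E)) = measure M U - measure M (- E)"
  proof -
    have "U \<inter> - E = - E" using U(1) by blast
    then show ?thesis using finite_measure_Diff'[OF Us cEs] by simp
  qed
  ultimately have m: "measure M (E - (- U)) \<le> e" using mU by simp
  have c: "closed (- U)" using U(2) by auto
  have s: "- U \<subseteq> E" using U(1) by blast
  show ?thesis by (rule exI[of _ "- U"]) (intro conjI c s m)
qed

lemma lusin:
  fixes M :: "'a::euclidean_space measure" and f :: "'a \<Rightarrow> 'b::euclidean_space"
  assumes sM: "sets M = sets borel" and fin: "finite_measure M"
    and f: "f \<in> borel_measurable borel" and e: "e > 0"
  shows "\<exists>C. closed C \<and> continuous_on C f \<and> measure M (- C) \<le> e"
proof -
  interpret finite_measure M by fact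
  obtain Bs :: "'b set set" where Bs: "countable Bs" "topological_basis Bs"
    using ex_countable_basis by blast
  have Bne: "Bs \<noteq> {}"
  proof
    assume "Bs = {}"
    moreover obtain B' where "B' \<subseteq> Bs" "\<Union>B' = (UNIV :: 'b set)"
      using Bs(2) unfolding topological_basis_def by (meson open_UNIV)
    ultimately show False by auto
  qed
  define V where "V n = from_nat_into Bs n" for n
  have rV: "range V = Bs" using Bne Bs(1) by (simp add: V_def range_from_nat_into)
  have Vo: "open (V n)" for n
    using topological_basis_open[OF Bs(2)] rV by blast
  define E where "E n = f -` V n" for n
  have Eb: "E n \<in> sets borel" for n
    using measurable_sets_borel[OF f, of "V n"] Vo[of n] by (simp add: E_def)
  define ee where "ee n = e / 4 * (1/2) ^ n" for n :: nat
  have eep: "ee n > 0" for n using e by (simp add: ee_def)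
  have "\<exists>F. closed F \<and> F \<subseteq> E n \<and> measure M (E n - F) \<le> ee n" for n
    by (rule closed_inner[OF sM fin Eb eep])
  then obtain F where F: "\<And>n. closed (F n)" "\<And>n. F n \<subseteq> E n" "\<And>n. measure M (E n - F n) \<le> ee n"
    by metis
  have "\<exists>G. closed G \<and> G \<subseteq> - E n \<and> measure M (- E n - G) \<le> ee n" for n
    by (rule closed_inner[OF sM fin _ eep]) (use Eb in auto)
  then obtain G where G: "\<And>n. closed (G n)" "\<And>n. G n \<subseteq> - E n" "\<And>n. measure M (- E n - G n) \<le> ee n"
    by metis
  define C where "C = (\<Inter>n. F n \<union> G n)"
  have Cc: "closed C" unfolding C_def using F(1) G(1) by auto
  define A where "A n = (E n - F n) \<union> (- E n - G n)" for n
  have CA: "- C = (\<Union>n. A n)" unfolding C_def A_def using F(2) G(2) by blast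
  have As: "range A \<subseteq> sets M"
    unfolding A_def using Eb F(1) G(1) sM by auto
  have mA: "measure M (A n) \<le> 2 * ee n" for n
  proof -
    have "measure M (A n) \<le> measure M (E n - F n) + measure M (- E n - G n)"
      unfolding A_def by (rule measure_Un_le) (use Eb F(1) G(1) sM in auto)
    then show ?thesis using F(3)[of n] G(3)[of n] by simp
  qed
  have sg: "summable (\<lambda>n. 2 * ee n)"
    unfolding ee_def by (intro summable_mult summable_geometric) simp
  have sA: "summable (\<lambda>n. measure M (A n))"
    by (rule summable_comparison_test'[OF sg]) (use mA in auto)
  have "measure M (- C) \<le> (\<Sum>n. measure M (A n))"
    unfolding CA by (rule finite_measure_subadditive_countably[OF As sA])
  also have "\<dots> \<le> (\<Sum>n. 2 * ee n)" by (rule suminf_le[OF mA sA sg])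
  also have "(\<Sum>n. 2 * ee n) = e"
  proof -
    have "(\<Sum>n. 2 * ee n) = (\<Sum>n. e / 2 * (1/2::real) ^ n)" unfolding ee_def by simp
    also have "\<dots> = e / 2 * (\<Sum>n. (1/2::real) ^ n)"
      by (rule suminf_mult) (rule summable_geometric, simp)
    also have "\<dots> = e" by (simp add: suminf_geometric)
    finally show ?thesis .
  qed
  finally have mC: "measure M (- C) \<le> e" .
  have cont: "continuous_on C f"
    unfolding continuous_on_open_invariant
  proof (intro allI impI)
    fix B :: "'b set" assume "open B"
    then obtain B' where B': "B' \<subseteq> Bs" "\<Union>B' = B"
      using Bs(2) unfolding topological_basis_def by meson
    define Op where "Op = (\<Union>n\<in>{n. V n \<in> B'}. - G n)"
    have "open Op" unfolding Op_def using G(1) by auto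
    moreover have "Op \<inter> C = f -` B \<inter> C"
    proof (intro equalityI subsetI)
      fix x assume x: "x \<in> Op \<inter> C"
      then obtain n where n: "V n \<in> B'" "x \<notin> G n" unfolding Op_def by auto
      have "x \<in> F n \<union> G n" using x unfolding C_def by auto
      then have "x \<in> E n" using n F(2) by auto
      then have "f x \<in> B" using n B' unfolding E_def by auto
      then show "x \<in> f -` B \<inter> C" using x by auto
    next
      fix x assume x: "x \<in> f -` B \<inter> C"
      then obtain W where W: "W \<in> B'" "f x \<in> W" using B' by auto
      then obtain n where n: "V n = W" using B' rV by blast
      have "x \<in> E n" using W n unfolding E_def by auto
      then have "x \<notin> G n" using G(2) by auto
      then show "x \<in> Op \<inter> C" using x W n unfolding Op_def by auto
    qed
    ultimately show "\<exists>A. open A \<and> A \<inter> C = f -` B \<inter> C" by blast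
  qed
  show ?thesis using Cc cont mC by blast
qed

lemma transfer:
  fixes mu1 mu2 :: "'a::euclidean_space measure" and f :: "'a \<Rightarrow> 'b::euclidean_space"
    and psi :: "'a \<Rightarrow> real" and L T :: real
  assumes p1: "prob_space mu1" and p2: "prob_space mu2"
    and s1: "sets mu1 = sets borel" and s2: "sets mu2 = sets borel"
    and f: "f \<in> borel_measurable borel"
    and inj: "inj_on f (msupport mu1 \<union> msupport mu2)"
    and psi: "psi \<in> borel_measurable borel" "\<And>x. 0 \<le> psi x" "\<And>x. psi x \<le> L"
    and hyp: "\<And>phi. phi \<in> borel_measurable borel \<Longrightarrow> (\<And>y. 0 \<le> phi y) \<Longrightarrow> (\<And>y. phi y \<le> L) \<Longrightarrow>
        (\<integral>y. phi y \<partial>(distr mu1 borel f)) - (\<integral>y. phi y \<partial>(distr mu2 borel f)) \<le> T"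
  shows "(\<integral>x. psi x \<partial>mu1) - (\<integral>x. psi x \<partial>mu2) \<le> T"
proof (rule field_le_epsilon)
  fix e :: real assume e: "e > 0"
  interpret m1: prob_space mu1 by fact
  interpret m2: prob_space mu2 by fact
  have L0: "L \<ge> 0" using psi(2,3) order_trans by blast
  define e' where "e' = e / (L + 1)"
  have e': "e' > 0" using e L0 by (simp add: e'_def)
  have Le: "L * e' \<le> e"
  proof -
    have "L * e' = e * (L / (L + 1))" by (simp add: e'_def field_simps)
    also have "\<dots> \<le> e * 1" using L0 e by (intro mult_left_mono) auto
    finally show ?thesis by simp
  qed
  have bm1: "borel_measurable mu1 = borel_measurable borel" by (rule measurable_cong_sets[OF s1 refl])
  have bm2: "borel_measurable mu2 = borel_measurable borel" by (rule measurable_cong_sets[OF s2 refl])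
  have fm1: "f \<in> mu1 \<rightarrow>\<^sub>M borel" using f by (simp add: measurable_cong_sets[OF s1 refl])
  have fm2: "f \<in> mu2 \<rightarrow>\<^sub>M borel" using f by (simp add: measurable_cong_sets[OF s2 refl])
  define S where "S = msupport mu1 \<union> msupport mu2"
  have Sc: "closed S" unfolding S_def using msupport_closed by auto
  have Sb: "S \<in> sets borel" by (simp add: Sc borel_closed)
  have Ss1: "S \<in> sets mu1" using Sb s1 by simp
  obtain K where K: "K \<subseteq> S" "compact K" "measure mu1 (S - K) \<le> e' / 2"
  proof (cases "measure mu1 S \<le> e' / 2")
    case True
    then show ?thesis using that[of "{}"] by auto
  next
    case False
    have "emeasure mu1 S = (SUP K \<in> {K. K \<subseteq> S \<and> compact K}. emeasure mu1 K)"
      by (rule inner_regular[OF s1 _ Sb]) simp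
    moreover have "ennreal (measure mu1 S - e' / 2) < emeasure mu1 S"
      using False e' by (simp add: m1.emeasure_eq_measure ennreal_less_iff)
    ultimately have "ennreal (measure mu1 S - e' / 2) < (SUP K \<in> {K. K \<subseteq> S \<and> compact K}. emeasure mu1 K)"
      by simp
    then obtain K where K: "K \<subseteq> S" "compact K" "ennreal (measure mu1 S - e' / 2) < emeasure mu1 K"
      unfolding less_SUP_iff by blast
    have Ks: "K \<in> sets mu1" using K(2) s1 by (simp add: compact_imp_closed borel_closed)
    have "measure mu1 S - e' / 2 < measure mu1 K"
      using K(3) False by (simp add: m1.emeasure_eq_measure ennreal_less_iff)
    moreover have "measure mu1 (S - K) = measure mu1 S - measure mu1 K"
      by (rule m1.finite_measure_Diff[OF Ss1 Ks K(1)])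
    ultimately show ?thesis using that[OF K(1,2)] by simp
  qed
  obtain C where C: "closed C" "continuous_on C f" "measure mu1 (- C) \<le> e' / 2"
    using lusin[OF s1 _ f, of "e' / 2"] e' m1.finite_measure_axioms by auto
  define D where "D = K \<inter> C"
  have Dc: "compact D" unfolding D_def using K(2) C(1) by auto
  have DS: "D \<subseteq> S" unfolding D_def using K(1) by auto
  have Db: "D \<in> sets borel" using Dc by (simp add: compact_imp_closed borel_closed)
  have injD: "inj_on f D" using inj DS unfolding S_def by (rule inj_on_subset)
  define g where "g = inv_into D f"
  have gf: "\<forall>x\<in>D. g (f x) = x" unfolding g_def using injD by auto
  have fcD: "continuous_on D f" using C(2) unfolding D_def by (rule continuous_on_subset) auto
  have gc: "continuous_on (f ` D) g" by (rule continuous_on_inv[OF fcD Dc gf])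
  have fDc: "compact (f ` D)" by (rule compact_continuous_image[OF fcD Dc])
  have fDb: "f ` D \<in> sets borel" using fDc by (simp add: compact_imp_closed borel_closed)
  define phi where "phi y = indicator (f ` D) y * psi (g y)" for y
  have phim: "phi \<in> borel_measurable borel"
  proof -
    have "g \<in> borel_measurable (restrict_space borel (f ` D))"
      by (rule borel_measurable_continuous_on_restrict[OF gc])
    then have "(\<lambda>y. psi (g y)) \<in> borel_measurable (restrict_space borel (f ` D))"
      using psi(1) by (rule measurable_compose)
    then have "(\<lambda>y. indicator (f ` D) y *\<^sub>R psi (g y)) \<in> borel_measurable borel"
      using borel_measurable_restrict_space_iff[of "f ` D" borel "\<lambda>y. psi (g y)"] fDb by simp
    then show ?thesis unfolding phi_def by simp
  qed
  have phi0: "0 \<le> phi y" for y unfolding phi_def using psi(2) by (simp add: indicator_def)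
  have phiL: "phi y \<le> L" for y unfolding phi_def using psi(3) L0 by (simp add: indicator_def)
  have key: "phi (f x) = indicator D x * psi x" if x: "x \<in> S" for x
  proof (cases "x \<in> D")
    case True
    then show ?thesis using gf by (simp add: phi_def)
  next
    case False
    have "f x \<notin> f ` D"
    proof
      assume "f x \<in> f ` D"
      then obtain d where d: "d \<in> D" "f x = f d" by auto
      then have "x = d" using inj x DS unfolding S_def by (auto dest: inj_onD)
      then show False using False d by simp
    qed
    then show ?thesis using False by (simp add: phi_def)
  qed
  have AE1: "AE x in mu1. x \<in> S" using AE_msupport[OF s1] unfolding S_def by auto
  have AE2: "AE x in mu2. x \<in> S" using AE_msupport[OF s2] unfolding S_def by auto
  have psim1: "psi \<in> borel_measurable mu1" using psi(1) by (simp add: measurable_cong_sets[OF s1 refl])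
  have psim2: "psi \<in> borel_measurable mu2" using psi(1) by (simp add: measurable_cong_sets[OF s2 refl])
  have Dm1: "(\<lambda>x. indicator D x * psi x) \<in> borel_measurable mu1" using psi(1) Db by (simp add: measurable_cong_sets[OF s1 refl])
  have Dm2: "(\<lambda>x. indicator D x * psi x) \<in> borel_measurable mu2" using psi(1) Db by (simp add: measurable_cong_sets[OF s2 refl])
  have phif1: "(\<lambda>x. phi (f x)) \<in> borel_measurable mu1" by (rule measurable_compose[OF fm1 phim])
  have phif2: "(\<lambda>x. phi (f x)) \<in> borel_measurable mu2" by (rule measurable_compose[OF fm2 phim])
  have I1: "(\<integral>y. phi y \<partial>(distr mu1 borel f)) = (\<integral>x. indicator D x * psi x \<partial>mu1)"
  proof -
    have "(\<integral>y. phi y \<partial>(distr mu1 borel f)) = (\<integral>x. phi (f x) \<partial>mu1)"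
      by (rule integral_distr[OF fm1 phim])
    also have "\<dots> = (\<integral>x. indicator D x * psi x \<partial>mu1)"
      by (rule integral_cong_AE[OF phif1 Dm1]) (use AE1 key in auto)
    finally show ?thesis .
  qed
  have I2: "(\<integral>y. phi y \<partial>(distr mu2 borel f)) = (\<integral>x. indicator D x * psi x \<partial>mu2)"
  proof -
    have "(\<integral>y. phi y \<partial>(distr mu2 borel f)) = (\<integral>x. phi (f x) \<partial>mu2)"
      by (rule integral_distr[OF fm2 phim])
    also have "\<dots> = (\<integral>x. indicator D x * psi x \<partial>mu2)"
      by (rule integral_cong_AE[OF phif2 Dm2]) (use AE2 key in auto)
    finally show ?thesis .
  qed
  have ipsi1: "integrable mu1 psi"
    by (rule m1.integrable_const_bound[of _ L]) (use psi psim1 in auto)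
  have ipsi2: "integrable mu2 psi"
    by (rule m2.integrable_const_bound[of _ L]) (use psi psim2 in auto)
  have iD1: "integrable mu1 (\<lambda>x. indicator D x * psi x)"
    by (rule m1.integrable_const_bound[of _ L]) (use psi Dm1 L0 in \<open>auto simp: indicator_def\<close>)
  have iD2: "integrable mu2 (\<lambda>x. indicator D x * psi x)"
    by (rule m2.integrable_const_bound[of _ L]) (use psi Dm2 L0 in \<open>auto simp: indicator_def\<close>)
  have Dcs1: "- D \<in> sets mu1" using Db s1 by auto
  have iC1: "integrable mu1 (\<lambda>x. L * indicator (- D) x)"
    using Dcs1 by (intro integrable_mult_right integrable_real_indicator) (auto simp: top.not_eq_extremum[symmetric] m1.emeasure_finite)
  have Kb: "K \<in> sets borel" using K(2) by (simp add: compact_imp_closed borel_closed)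
  have Cb: "C \<in> sets borel" using C(1) by (simp add: borel_closed)
  have Mb: "msupport mu1 \<in> sets borel" by (rule borel_closed[OF msupport_closed])
  have mD: "measure mu1 (- D) \<le> e'"
  proof -
    have n0: "measure mu1 (- msupport mu1) = 0"
      using msupport_null[OF s1] by (auto simp: null_sets_def measure_def)
    have "- D \<subseteq> (- msupport mu1) \<union> ((S - K) \<union> (- C))" unfolding D_def S_def by auto
    then have "measure mu1 (- D) \<le> measure mu1 ((- msupport mu1) \<union> ((S - K) \<union> (- C)))"
      by (intro m1.finite_measure_mono) (use Sb Kb Cb Mb s1 in auto)
    also have "\<dots> \<le> measure mu1 (- msupport mu1) + measure mu1 ((S - K) \<union> (- C))"
      by (rule measure_Un_le) (use Sb Kb Cb Mb s1 in auto)
    also have "measure mu1 ((S - K) \<union> (- C)) \<le> measure mu1 (S - K) + measure mu1 (- C)"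
      by (rule measure_Un_le) (use Sb Kb Cb s1 in auto)
    finally show ?thesis using n0 K(3) C(3) by simp
  qed
  have "(\<integral>x. psi x \<partial>mu1) \<le> (\<integral>x. indicator D x * psi x + L * indicator (- D) x \<partial>mu1)"
    by (rule integral_mono[OF ipsi1 Bochner_Integration.integrable_add[OF iD1 iC1]])
       (use psi in \<open>auto simp: indicator_def\<close>)
  also have "\<dots> = (\<integral>x. indicator D x * psi x \<partial>mu1) + L * measure mu1 (- D)"
    using iD1 iC1 Dcs1 by (simp add: m1.prob_space_axioms)
  finally have A1: "(\<integral>x. psi x \<partial>mu1) \<le> (\<integral>x. indicator D x * psi x \<partial>mu1) + L * e'"
    using mD L0 by (smt (verit) mult_left_mono)
  have A2: "(\<integral>x. indicator D x * psi x \<partial>mu2) \<le> (\<integral>x. psi x \<partial>mu2)"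
    by (rule integral_mono[OF iD2 ipsi2]) (use psi in \<open>auto simp: indicator_def\<close>)
  have "(\<integral>y. phi y \<partial>(distr mu1 borel f)) - (\<integral>y. phi y \<partial>(distr mu2 borel f)) \<le> T"
    by (rule hyp[OF phim phi0 phiL])
  then show "(\<integral>x. psi x \<partial>mu1) - (\<integral>x. psi x \<partial>mu2) \<le> T + e"
    using A1 A2 Le I1 I2 by linarith
qed

lemma pos_part_bound:
  fixes a b t :: real
  assumes a: "a > 0" and b: "b > 0" and t: "t > 0"
  shows "max (a - b) 0 \<le> ((a - b) * (ln a - ln b) / t + t * a) / 2"
proof (cases "a \<le> b")
  case True
  then have "(a - b) * (ln a - ln b) \<ge> 0"
    using a b by (intro mult_nonpos_nonpos) auto
  then show ?thesis using True t a by (auto intro!: add_nonneg_nonneg divide_nonneg_pos)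
next
  case False
  define X where "X = (a - b) * (ln a - ln b)"
  have "ln (b / a) \<le> b / a - 1" using a b by (intro ln_le_minus_one) auto
  then have l: "ln a - ln b \<ge> (a - b) / a" using a b by (simp add: ln_div field_simps)
  have lab: "ln b \<le> ln a" using a b False by simp
  have X0: "X \<ge> 0" using False lab unfolding X_def by (intro mult_nonneg_nonneg) auto
  have "(a - b) * ((a - b) / a) \<le> X" unfolding X_def using False l by (intro mult_left_mono) auto
  then have sq: "(a - b)^2 \<le> a * X" using a by (simp add: power2_eq_square field_simps)
  have "4 * (a * X) \<le> (X / t + t * a)^2"
  proof -
    have "(X / t + t * a)^2 - 4 * (a * X) = (X / t - t * a)^2"
      using t by (simp add: power2_eq_square field_simps)
    then show ?thesis by (smt (verit) zero_le_power2)
  qed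
  then have "(a - b)^2 \<le> ((X / t + t * a) / 2)^2" using sq by (simp add: power_divide)
  moreover have "(X / t + t * a) / 2 \<ge> 0" using X0 t a by simp
  ultimately have "a - b \<le> (X / t + t * a) / 2"
    by (metis abs_le_square_iff abs_of_nonneg abs_ge_self order_trans)
  then show ?thesis using False unfolding X_def by simp
qed

lemma le_sqrt_from_family:
  fixes m J :: real
  assumes J: "J \<ge> 0" and h: "\<And>t. t > 0 \<Longrightarrow> m \<le> (J / t + t) / 2"
  shows "m \<le> sqrt J"
proof (cases "J = 0")
  case True
  have "m \<le> 0 + e" if e: "e > 0" for e
    using h[of "2 * e"] e True by simp
  then have "m \<le> 0" by (rule field_le_epsilon)
  then show ?thesis using True by simp
next
  case False
  then have Jp: "J > 0" using J by simp
  have "m \<le> (J / sqrt J + sqrt J) / 2" using h[of "sqrt J"] Jp by simp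
  also have "J / sqrt J = sqrt J" using Jp by (simp add: real_div_sqrt)
  finally show ?thesis by simp
qed

lemma density_tv:
  fixes p q :: "'b::euclidean_space \<Rightarrow> real" and phi :: "'b \<Rightarrow> real"
  assumes pm: "p \<in> borel_measurable borel" and qm: "q \<in> borel_measurable borel"
    and ppos: "\<And>x. p x > 0" and qpos: "\<And>x. q x > 0"
    and Pp: "prob_space (density lborel (\<lambda>x. ennreal (p x)))"
    and Qp: "prob_space (density lborel (\<lambda>x. ennreal (q x)))"
    and phim: "phi \<in> borel_measurable borel" and phi0: "\<And>y. 0 \<le> phi y" and phiL: "\<And>y. phi y \<le> L"
    and Ji: "integrable lborel (\<lambda>x. (p x - q x) * (ln (p x) - ln (q x)))"
  shows "(\<integral>y. phi y \<partial>density lborel (\<lambda>x. ennreal (p x))) - (\<integral>y. phi y \<partial>density lborel (\<lambda>x. ennreal (q x)))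
     \<le> L * sqrt (\<integral>x. (p x - q x) * (ln (p x) - ln (q x)) \<partial>lborel)"
proof -
  define J where "J = (\<integral>x. (p x - q x) * (ln (p x) - ln (q x)) \<partial>lborel)"
  have L0: "L \<ge> 0" using phi0 phiL order_trans by blast
  have pmL: "p \<in> borel_measurable lborel" using pm by simp
  have qmL: "q \<in> borel_measurable lborel" using qm by simp
  have nnp: "(\<integral>\<^sup>+x. ennreal (p x) \<partial>lborel) = 1"
  proof -
    have "emeasure (density lborel (\<lambda>x. ennreal (p x))) UNIV = 1"
      using prob_space.emeasure_space_1[OF Pp] by simp
    then show ?thesis using pm by (simp add: emeasure_density)
  qed
  have nnq: "(\<integral>\<^sup>+x. ennreal (q x) \<partial>lborel) = 1"
  proof -
    have "emeasure (density lborel (\<lambda>x. ennreal (q x))) UNIV = 1"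
      using prob_space.emeasure_space_1[OF Qp] by simp
    then show ?thesis using qm by (simp add: emeasure_density)
  qed
  have ip: "integrable lborel p"
    by (rule integrableI_nonneg) (use pmL ppos nnp in \<open>auto intro: less_imp_le\<close>)
  have iq: "integrable lborel q"
    by (rule integrableI_nonneg) (use qmL qpos nnq in \<open>auto intro: less_imp_le\<close>)
  have intp: "(\<integral>x. p x \<partial>lborel) = 1"
    using nnp pmL ppos by (subst integral_eq_nn_integral) (auto intro: less_imp_le)
  have J0: "J \<ge> 0"
    unfolding J_def
  proof (rule integral_nonneg_AE, rule AE_I2)
    fix x
    show "0 \<le> (p x - q x) * (ln (p x) - ln (q x))"
      using ppos[of x] qpos[of x]
      by (cases "p x \<le> q x") (auto intro: mult_nonpos_nonpos mult_nonneg_nonneg)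
  qed
  have phimL: "phi \<in> borel_measurable lborel" using phim by simp
  have ipphi: "integrable lborel (\<lambda>x. p x * phi x)"
    by (rule Bochner_Integration.integrable_bound[OF integrable_mult_right[OF ip, of L]])
       (use pmL phimL ppos phi0 phiL L0 in \<open>auto intro!: mult_left_mono simp: abs_mult less_imp_le mult.commute\<close>)
  have iqphi: "integrable lborel (\<lambda>x. q x * phi x)"
    by (rule Bochner_Integration.integrable_bound[OF integrable_mult_right[OF iq, of L]])
       (use qmL phimL qpos phi0 phiL L0 in \<open>auto intro!: mult_left_mono simp: abs_mult less_imp_le mult.commute\<close>)
  have imax: "integrable lborel (\<lambda>x. max (p x - q x) 0)"
    by (rule Bochner_Integration.integrable_bound[OF ip]) (use pmL qmL ppos qpos in \<open>auto simp: less_imp_le\<close>)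
  have Ip: "(\<integral>y. phi y \<partial>density lborel (\<lambda>x. ennreal (p x))) = (\<integral>x. p x * phi x \<partial>lborel)"
    using integral_density[OF phimL pmL, of] ppos by (simp add: less_imp_le)
  have Iq: "(\<integral>y. phi y \<partial>density lborel (\<lambda>x. ennreal (q x))) = (\<integral>x. q x * phi x \<partial>lborel)"
    using integral_density[OF phimL qmL, of] qpos by (simp add: less_imp_le)
  have "(\<integral>x. p x * phi x \<partial>lborel) - (\<integral>x. q x * phi x \<partial>lborel)
      = (\<integral>x. p x * phi x - q x * phi x \<partial>lborel)"
    using ipphi iqphi by simp
  also have "\<dots> \<le> (\<integral>x. L * max (p x - q x) 0 \<partial>lborel)"
  proof (rule integral_mono)
    show "integrable lborel (\<lambda>x. p x * phi x - q x * phi x)" using ipphi iqphi by simp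
    show "integrable lborel (\<lambda>x. L * max (p x - q x) 0)" using imax by simp
    fix x
    have "p x * phi x - q x * phi x = phi x * (p x - q x)" by (simp add: algebra_simps)
    also have "\<dots> \<le> phi x * max (p x - q x) 0" using phi0[of x] by (intro mult_left_mono) auto
    also have "\<dots> \<le> L * max (p x - q x) 0" using phiL[of x] by (intro mult_right_mono) auto
    finally show "p x * phi x - q x * phi x \<le> L * max (p x - q x) 0" .
  qed
  also have "\<dots> = L * (\<integral>x. max (p x - q x) 0 \<partial>lborel)" by simp
  also have "(\<integral>x. max (p x - q x) 0 \<partial>lborel) \<le> sqrt J"
  proof (rule le_sqrt_from_family[OF J0])
    fix t :: real assume t: "t > 0"
    have "(\<integral>x. max (p x - q x) 0 \<partial>lborel)
        \<le> (\<integral>x. ((p x - q x) * (ln (p x) - ln (q x)) / t + t * p x) / 2 \<partial>lborel)"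
      by (rule integral_mono[OF imax]) (use Ji ip pos_part_bound[OF ppos qpos t] in auto)
    also have "\<dots> = (J / t + t) / 2"
      using Ji ip intp by (simp add: J_def)
    finally show "(\<integral>x. max (p x - q x) 0 \<partial>lborel) \<le> (J / t + t) / 2" .
  qed
  then have "L * (\<integral>x. max (p x - q x) 0 \<partial>lborel) \<le> L * sqrt J" using L0 by (rule mult_left_mono)
  finally show ?thesis using Ip Iq by (simp add: J_def)
qed

lemma log_segment:
  fixes lp :: "'b::euclidean_space \<Rightarrow> real" and G :: "'b \<Rightarrow> 'b"
  assumes grad: "\<And>x. (lp has_derivative (\<lambda>v. G x \<bullet> v)) (at x)"
    and bnd: "\<And>x. norm (G x) \<le> c1 * norm x + c2" and c1: "c1 \<ge> 0"
  shows "\<bar>lp x - lp y\<bar> \<le> (c1 * (norm x + norm y) / 2 + c2) * norm (x - y)"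
proof -
  define h where "h t = lp (y + t *\<^sub>R (x - y))" for t :: real
  define a where "a = norm y"
  define b where "b = norm x"
  define d where "d = norm (x - y)"
  define k where "k t = (c1 * (a * t - a * t^2 / 2 + b * t^2 / 2) + c2 * t) * d" for t :: real
  have hd: "(h has_real_derivative (G (y + t *\<^sub>R (x - y)) \<bullet> (x - y))) (at t)" for t
  proof -
    have l: "((\<lambda>t. y + t *\<^sub>R (x - y)) has_derivative (\<lambda>s. s *\<^sub>R (x - y))) (at t)"
      by (auto intro!: derivative_eq_intros)
    have "((lp \<circ> (\<lambda>t. y + t *\<^sub>R (x - y))) has_derivative
           ((\<lambda>v. G (y + t *\<^sub>R (x - y)) \<bullet> v) \<circ> (\<lambda>s. s *\<^sub>R (x - y)))) (at t)"
      by (rule diff_chain_at[OF l grad])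
    moreover have "((\<lambda>v. G (y + t *\<^sub>R (x - y)) \<bullet> v) \<circ> (\<lambda>s. s *\<^sub>R (x - y)))
        = (\<lambda>s. (G (y + t *\<^sub>R (x - y)) \<bullet> (x - y)) * s)"
      by (simp add: o_def fun_eq_iff mult.commute)
    ultimately show ?thesis unfolding has_field_derivative_def h_def by (simp add: o_def)
  qed
  have kd: "(k has_real_derivative ((c1 * (a - a * t + b * t) + c2) * d)) (at t)" for t
    unfolding k_def by (auto intro!: derivative_eq_intros simp: algebra_simps)
  have gb: "\<bar>G (y + t *\<^sub>R (x - y)) \<bullet> (x - y)\<bar> \<le> (c1 * (a - a * t + b * t) + c2) * d"
    if t: "0 \<le> t" "t \<le> 1" for t
  proof -
    define z where "z = y + t *\<^sub>R (x - y)"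
    have zz: "z = (1 - t) *\<^sub>R y + t *\<^sub>R x" unfolding z_def by (simp add: algebra_simps)
    have nz: "norm z \<le> (1 - t) * a + t * b"
    proof -
      have "norm z \<le> norm ((1 - t) *\<^sub>R y) + norm (t *\<^sub>R x)" unfolding zz by (rule norm_triangle_ineq)
      also have "\<dots> = (1 - t) * a + t * b" using t by (simp add: a_def b_def)
      finally show ?thesis .
    qed
    have "\<bar>G z \<bullet> (x - y)\<bar> \<le> norm (G z) * d" unfolding d_def by (rule Cauchy_Schwarz_ineq2)
    also have "\<dots> \<le> (c1 * norm z + c2) * d" using bnd[of z] by (intro mult_right_mono) (auto simp: d_def)
    also have "\<dots> \<le> (c1 * ((1 - t) * a + t * b) + c2) * d"
      using nz c1 by (intro mult_right_mono add_right_mono mult_left_mono) (auto simp: d_def)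
    finally show ?thesis unfolding z_def by (simp add: algebra_simps)
  qed
  have m1: "k 0 - h 0 \<le> k 1 - h 1"
  proof (rule DERIV_nonneg_imp_nondecreasing[of 0 1 "\<lambda>t. k t - h t"])
    fix t :: real assume "0 \<le> t" "t \<le> 1"
    then show "\<exists>D. ((\<lambda>t. k t - h t) has_real_derivative D) (at t) \<and> D \<ge> 0"
      using gb[of t] by (intro exI conjI) (rule DERIV_diff[OF kd hd], simp)
  qed simp
  have m2: "k 0 + h 0 \<le> k 1 + h 1"
  proof (rule DERIV_nonneg_imp_nondecreasing[of 0 1 "\<lambda>t. k t + h t"])
    fix t :: real assume "0 \<le> t" "t \<le> 1"
    then show "\<exists>D. ((\<lambda>t. k t + h t) has_real_derivative D) (at t) \<and> D \<ge> 0"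
      using gb[of t] by (intro exI conjI) (rule DERIV_add[OF kd hd], simp)
  qed simp
  have k0: "k 0 = 0" by (simp add: k_def)
  have k1: "k 1 = (c1 * (norm x + norm y) / 2 + c2) * norm (x - y)"
    by (simp add: k_def a_def b_def d_def field_simps)
  have h0: "h 0 = lp y" by (simp add: h_def)
  have h1: "h 1 = lp x" by (simp add: h_def)
  show ?thesis using m1 m2 k0 k1 h0 h1 by linarith
qed

lemma sq_prod_le: "\<bar>(u::real) * v\<bar> \<le> (u^2 + v^2) / 2"
proof -
  have "0 \<le> (\<bar>u\<bar> - \<bar>v\<bar>)^2" by simp
  then show ?thesis by (simp add: power2_eq_square algebra_simps abs_mult)
qed

lemma cs_integral:
  fixes f g :: "'m \<Rightarrow> real"
  assumes fm: "f \<in> borel_measurable M" and gm: "g \<in> borel_measurable M"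
    and f2: "integrable M (\<lambda>x. (f x)^2)" and g2: "integrable M (\<lambda>x. (g x)^2)"
  shows cs_integrable: "integrable M (\<lambda>x. f x * g x)"
    and cs_ineq: "(\<integral>x. f x * g x \<partial>M) \<le> sqrt (\<integral>x. (f x)^2 \<partial>M) * sqrt (\<integral>x. (g x)^2 \<partial>M)"
proof -
  show ifg: "integrable M (\<lambda>x. f x * g x)"
    by (rule Bochner_Integration.integrable_bound[OF integrable_divide[OF Bochner_Integration.integrable_add[OF f2 g2], of 2]])
       (use fm gm sq_prod_le in auto)
  define A where "A = (\<integral>x. (f x)^2 \<partial>M)"
  define B where "B = (\<integral>x. (g x)^2 \<partial>M)"
  have A0: "A \<ge> 0" unfolding A_def by (rule integral_nonneg_AE) auto
  have B0: "B \<ge> 0" unfolding B_def by (rule integral_nonneg_AE) auto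
  define m where "m = (\<integral>x. f x * g x \<partial>M)"
  have fam: "m \<le> (A / t + t * B) / 2" if t: "t > 0" for t
  proof -
    have "m \<le> (\<integral>x. ((f x)^2 / t + t * (g x)^2) / 2 \<partial>M)"
      unfolding m_def
    proof (rule integral_mono[OF ifg])
      show "integrable M (\<lambda>x. ((f x)^2 / t + t * (g x)^2) / 2)" using f2 g2 by auto
      fix x
      have "0 \<le> (f x - t * g x)^2 / t" using t by simp
      also have "(f x - t * g x)^2 / t = (f x)^2 / t + t * (g x)^2 - 2 * (f x * g x)"
        using t by (simp add: power2_eq_square field_simps)
      finally show "f x * g x \<le> ((f x)^2 / t + t * (g x)^2) / 2" by simp
    qed
    also have "\<dots> = (A / t + t * B) / 2" using f2 g2 by (simp add: A_def B_def)
    finally show ?thesis .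
  qed
  have "m \<le> sqrt (A * B)"
  proof (cases "B = 0")
    case True
    have "m \<le> 0 + e" if e: "e > 0" for e
    proof -
      have "m \<le> (A / ((A + 1) / (2 * e)) + 0) / 2" using fam[of "(A + 1) / (2 * e)"] True e A0 by simp
      also have "\<dots> = e * (A / (A + 1))" using A0 e by (simp add: field_simps)
      also have "\<dots> \<le> e * 1" using A0 e by (intro mult_left_mono) auto
      finally show ?thesis by simp
    qed
    then have "m \<le> 0" by (rule field_le_epsilon)
    then show ?thesis using True by simp
  next
    case False
    then have Bp: "B > 0" using B0 by simp
    show ?thesis
    proof (rule le_sqrt_from_family)
      show "A * B \<ge> 0" using A0 B0 by simp
      fix t :: real assume t: "t > 0"
      have "m \<le> (A / (t / B) + t / B * B) / 2" using fam[of "t / B"] t Bp by simp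
      also have "\<dots> = (A * B / t + t) / 2" using Bp t by (simp add: field_simps)
      finally show "m \<le> (A * B / t + t) / 2" .
    qed
  qed
  then show "(\<integral>x. f x * g x \<partial>M) \<le> sqrt (\<integral>x. (f x)^2 \<partial>M) * sqrt (\<integral>x. (g x)^2 \<partial>M)"
    by (simp add: m_def A_def B_def real_sqrt_mult)
qed

lemma minkowski_integral:
  fixes f g :: "'m \<Rightarrow> real"
  assumes fm: "f \<in> borel_measurable M" and gm: "g \<in> borel_measurable M"
    and f2: "integrable M (\<lambda>x. (f x)^2)" and g2: "integrable M (\<lambda>x. (g x)^2)"
  shows "integrable M (\<lambda>x. (f x + g x)^2)"
    and "sqrt (\<integral>x. (f x + g x)^2 \<partial>M) \<le> sqrt (\<integral>x. (f x)^2 \<partial>M) + sqrt (\<integral>x. (g x)^2 \<partial>M)"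
proof -
  have ifg: "integrable M (\<lambda>x. f x * g x)" by (rule cs_integrable[OF fm gm f2 g2])
  have eq: "(\<lambda>x. (f x + g x)^2) = (\<lambda>x. (f x)^2 + 2 * (f x * g x) + (g x)^2)"
    by (simp add: fun_eq_iff power2_eq_square algebra_simps)
  show "integrable M (\<lambda>x. (f x + g x)^2)" unfolding eq using f2 g2 ifg by auto
  define A where "A = (\<integral>x. (f x)^2 \<partial>M)"
  define B where "B = (\<integral>x. (g x)^2 \<partial>M)"
  have A0: "A \<ge> 0" unfolding A_def by (rule integral_nonneg_AE) auto
  have B0: "B \<ge> 0" unfolding B_def by (rule integral_nonneg_AE) auto
  have "(\<integral>x. (f x + g x)^2 \<partial>M) = A + 2 * (\<integral>x. f x * g x \<partial>M) + B"
    unfolding eq using f2 g2 ifg by (simp add: A_def B_def)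
  also have "\<dots> \<le> A + 2 * (sqrt A * sqrt B) + B"
    using cs_ineq[OF fm gm f2 g2] by (simp add: A_def B_def)
  also have "\<dots> = (sqrt A + sqrt B)^2"
    using A0 B0 by (simp add: power2_eq_square algebra_simps)
  finally have "sqrt (\<integral>x. (f x + g x)^2 \<partial>M) \<le> sqrt ((sqrt A + sqrt B)^2)"
    by (rule real_sqrt_le_mono)
  also have "\<dots> = sqrt A + sqrt B" using A0 B0 by simp
  finally show "sqrt (\<integral>x. (f x + g x)^2 \<partial>M) \<le> sqrt (\<integral>x. (f x)^2 \<partial>M) + sqrt (\<integral>x. (g x)^2 \<partial>M)"
    by (simp add: A_def B_def)
qed

lemma dense_seq:
  fixes r :: real assumes r: "r > 0"
  obtains d :: "nat \<Rightarrow> 'b::euclidean_space" where "\<And>x. \<exists>n. dist x (d n) < r"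
proof -
  obtain D :: "'b set" where D: "countable D" "\<And>X. open X \<Longrightarrow> X \<noteq> {} \<Longrightarrow> \<exists>d\<in>D. d \<in> X"
    using countable_dense_setE by blast
  have Dne: "D \<noteq> {}" using D(2)[of UNIV] by auto
  define d where "d = from_nat_into D"
  have "\<exists>n. dist x (d n) < r" for x
  proof -
    obtain e where e: "e \<in> D" "e \<in> ball x r" using D(2)[of "ball x r"] r by auto
    then obtain n where "d n = e" using Dne D(1) unfolding d_def by (metis from_nat_into_surj)
    then show ?thesis using e(2) by (auto simp: dist_commute)
  qed
  then show ?thesis using that by blast
qed

lemma glue:
  fixes P M Q :: "'b::euclidean_space measure" and g1 g2 :: "('b \<times> 'b) measure" and dl :: real
  assumes g1: "g1 \<in> couplings P M" and g2: "g2 \<in> couplings M Q" and dl: "dl > 0"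
  shows "\<exists>\<Gamma>. prob_space \<Gamma> \<and> sets \<Gamma> = sets (g1 \<Otimes>\<^sub>M g2) \<and>
      distr \<Gamma> (borel \<Otimes>\<^sub>M borel) fst = g1 \<and> distr \<Gamma> (borel \<Otimes>\<^sub>M borel) snd = g2 \<and>
      integrable \<Gamma> (\<lambda>\<omega>. (norm (snd (fst \<omega>) - fst (snd \<omega>)))\<^sup>2) \<and>
      (\<integral>\<omega>. (norm (snd (fst \<omega>) - fst (snd \<omega>)))\<^sup>2 \<partial>\<Gamma>) \<le> dl\<^sup>2"
proof -
  have p1: "prob_space g1" and s1: "sets g1 = sets (borel \<Otimes>\<^sub>M borel)" and m1: "distr g1 borel snd = M"
    using g1 unfolding couplings_def by auto
  have p2: "prob_space g2" and s2: "sets g2 = sets (borel \<Otimes>\<^sub>M borel)" and m2: "distr g2 borel fst = M"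
    using g2 unfolding couplings_def by auto
  interpret G1: prob_space g1 by fact
  interpret G2: prob_space g2 by fact
  interpret G12: pair_prob_space g1 g2 by unfold_locales
  have sp1: "space g1 = UNIV" using sets_eq_imp_space_eq[OF s1] by (simp add: space_pair_measure)
  have sp2: "space g2 = UNIV" using sets_eq_imp_space_eq[OF s2] by (simp add: space_pair_measure)
  have spp: "space (g1 \<Otimes>\<^sub>M g2) = UNIV" by (simp add: space_pair_measure sp1 sp2)
  have fst1: "fst \<in> g1 \<rightarrow>\<^sub>M borel" by (simp add: measurable_cong_sets[OF s1 refl])
  have snd1: "snd \<in> g1 \<rightarrow>\<^sub>M borel" by (simp add: measurable_cong_sets[OF s1 refl])
  have fst2: "fst \<in> g2 \<rightarrow>\<^sub>M borel" by (simp add: measurable_cong_sets[OF s2 refl])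
  have snd2: "snd \<in> g2 \<rightarrow>\<^sub>M borel" by (simp add: measurable_cong_sets[OF s2 refl])
  have Mp: "prob_space M" using G1.prob_space_distr[OF snd1] m1 by simp
  interpret MM: prob_space M by fact
  define r where "r = dl / 2"
  have r: "r > 0" using dl by (simp add: r_def)
  obtain d :: "nat \<Rightarrow> 'b" where d: "\<And>x. \<exists>n. dist x (d n) < r" using dense_seq[OF r] by blast
  define c where "c x = (LEAST n. dist x (d n) < r)" for x
  have cx: "dist x (d (c x)) < r" for x unfolding c_def using d[of x] by (rule LeastI_ex)
  have cpre: "c -` {n} = ball (d n) r \<inter> (\<Inter>j\<in>{..<n}. - ball (d j) r)" for n
  proof (intro equalityI subsetI)
    fix x assume "x \<in> c -` {n}"
    then have cn: "c x = n" by simp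
    have "\<not> dist x (d j) < r" if "j < n" for j
      using not_less_Least[of j "\<lambda>n. dist x (d n) < r"] that cn unfolding c_def by simp
    then show "x \<in> ball (d n) r \<inter> (\<Inter>j\<in>{..<n}. - ball (d j) r)"
      using cx[of x] cn by (auto simp: dist_commute)
  next
    fix x assume "x \<in> ball (d n) r \<inter> (\<Inter>j\<in>{..<n}. - ball (d j) r)"
    then have a: "dist x (d n) < r" "\<And>j. j < n \<Longrightarrow> \<not> dist x (d j) < r" by (auto simp: dist_commute)
    have "c x = n" unfolding c_def
      by (rule Least_equality) (use a in \<open>auto simp: not_less[symmetric]\<close>)
    then show "x \<in> c -` {n}" by simp
  qed
  have cb: "c -` {n} \<in> sets borel" for n
  proof -
    have "closed (\<Inter>j\<in>{..<n}. - ball (d j) r)" by (intro closed_INT) auto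
    then show ?thesis unfolding cpre by (intro sets.Int borel_open borel_closed) auto
  qed
  have cm: "c \<in> borel \<rightarrow>\<^sub>M count_space UNIV"
    unfolding measurable_count_space_eq2_countable using cb by auto
  have cdist: "dist z z' < dl" if "c z = c z'" for z z'
  proof -
    have "dist z z' \<le> dist z (d (c z)) + dist (d (c z)) z'" by (rule dist_triangle)
    also have "\<dots> < r + r" using cx[of z] cx[of z'] that by (simp add: dist_commute add_strict_mono)
    finally show ?thesis by (simp add: r_def)
  qed
  have zm: "(\<lambda>\<omega>. snd (fst \<omega>)) \<in> (g1 \<Otimes>\<^sub>M g2) \<rightarrow>\<^sub>M borel"
    by (rule measurable_compose[OF measurable_fst snd1])
  have z'm: "(\<lambda>\<omega>. fst (snd \<omega>)) \<in> (g1 \<Otimes>\<^sub>M g2) \<rightarrow>\<^sub>M borel"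
    by (rule measurable_compose[OF measurable_snd fst2])
  have czm: "(\<lambda>\<omega>. c (snd (fst \<omega>))) \<in> (g1 \<Otimes>\<^sub>M g2) \<rightarrow>\<^sub>M count_space UNIV"
    by (rule measurable_compose[OF zm cm])
  have cz'm: "(\<lambda>\<omega>. c (fst (snd \<omega>))) \<in> (g1 \<Otimes>\<^sub>M g2) \<rightarrow>\<^sub>M count_space UNIV"
    by (rule measurable_compose[OF z'm cm])
  define mM where "mM n = emeasure M (c -` {n})" for n
  have mfin: "mM n < top" for n unfolding mM_def by (simp add: MM.emeasure_finite top.not_eq_extremum[symmetric])
  define w where "w \<omega> = (if c (snd (fst \<omega>)) = c (fst (snd \<omega>)) then 1 / mM (c (snd (fst \<omega>))) else 0)"
    for \<omega> :: "('b \<times> 'b) \<times> ('b \<times> 'b)"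
  have wm: "w \<in> borel_measurable (g1 \<Otimes>\<^sub>M g2)"
  proof -
    have fi: "(\<lambda>\<omega>. if c (fst (snd \<omega>)) = i then 1 / mM i else 0) \<in> borel_measurable (g1 \<Otimes>\<^sub>M g2)" for i
    proof (rule measurable_If)
      have "{\<omega> \<in> space (g1 \<Otimes>\<^sub>M g2). c (fst (snd \<omega>)) = i}
          = (\<lambda>\<omega>. c (fst (snd \<omega>))) -` {i} \<inter> space (g1 \<Otimes>\<^sub>M g2)" by auto
      also have "\<dots> \<in> sets (g1 \<Otimes>\<^sub>M g2)" by (rule measurable_sets[OF cz'm]) simp
      finally show "{\<omega> \<in> space (g1 \<Otimes>\<^sub>M g2). c (fst (snd \<omega>)) = i} \<in> sets (g1 \<Otimes>\<^sub>M g2)" .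
    qed auto
    have "(\<lambda>\<omega>. (\<lambda>i \<omega>. if c (fst (snd \<omega>)) = i then 1 / mM i else 0) (c (snd (fst \<omega>))) \<omega>)
        \<in> borel_measurable (g1 \<Otimes>\<^sub>M g2)"
      by (rule measurable_compose_countable'[OF fi czm]) auto
    moreover have "(\<lambda>\<omega>. (\<lambda>i \<omega>. if c (fst (snd \<omega>)) = i then 1 / mM i else 0) (c (snd (fst \<omega>))) \<omega>) = w"
      by (auto simp: w_def fun_eq_iff)
    ultimately show ?thesis by simp
  qed
  have pre2: "fst -` B \<in> sets g2" if "B \<in> sets borel" for B
    using measurable_sets[OF fst2 that] sp2 by simp
  have pre1: "snd -` B \<in> sets g1" if "B \<in> sets borel" for B
    using measurable_sets[OF snd1 that] sp1 by simp
  have ms2: "emeasure g2 (fst -` B) = emeasure M B" if "B \<in> sets borel" for B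
    using emeasure_distr[OF fst2 that] m2 sp2 by simp
  have ms1: "emeasure g1 (snd -` B) = emeasure M B" if "B \<in> sets borel" for B
    using emeasure_distr[OF snd1 that] m1 sp1 by simp
  have divx: "1 / x * x = (if x = 0 then 0 else 1)" if "x < top" for x :: ennreal
    using that by (auto simp: ennreal_divide_times)
  have inner1: "(\<integral>\<^sup>+b. w (a, b) \<partial>g2) = (if mM (c (snd a)) = 0 then 0 else 1)" for a
  proof -
    have "(\<integral>\<^sup>+b. w (a, b) \<partial>g2) = (\<integral>\<^sup>+b. (1 / mM (c (snd a))) * indicator (fst -` (c -` {c (snd a)})) b \<partial>g2)"
      by (intro nn_integral_cong) (auto simp: w_def indicator_def)
    also have "\<dots> = (1 / mM (c (snd a))) * emeasure g2 (fst -` (c -` {c (snd a)}))"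
      by (rule nn_integral_cmult_indicator[OF pre2[OF cb]])
    also have "\<dots> = (1 / mM (c (snd a))) * mM (c (snd a))" using ms2[OF cb] by (simp add: mM_def)
    finally show ?thesis using divx[OF mfin] by simp
  qed
  have inner2: "(\<integral>\<^sup>+a. w (a, b) \<partial>g1) = (if mM (c (fst b)) = 0 then 0 else 1)" for b
  proof -
    have "(\<integral>\<^sup>+a. w (a, b) \<partial>g1) = (\<integral>\<^sup>+a. (1 / mM (c (fst b))) * indicator (snd -` (c -` {c (fst b)})) a \<partial>g1)"
      by (intro nn_integral_cong) (auto simp: w_def indicator_def)
    also have "\<dots> = (1 / mM (c (fst b))) * emeasure g1 (snd -` (c -` {c (fst b)}))"
      by (rule nn_integral_cmult_indicator[OF pre1[OF cb]])
    also have "\<dots> = (1 / mM (c (fst b))) * mM (c (fst b))" using ms1[OF cb] by (simp add: mM_def)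
    finally show ?thesis using divx[OF mfin] by simp
  qed
  have AE1: "AE a in g1. mM (c (snd a)) \<noteq> 0"
  proof (rule AE_I')
    show "(\<Union>n\<in>{n. mM n = 0}. snd -` (c -` {n})) \<in> null_sets g1"
      by (rule null_sets_UN') (auto simp: null_sets_def pre1[OF cb] ms1[OF cb] mM_def)
  qed (auto simp: sp1)
  have AE2: "AE b in g2. mM (c (fst b)) \<noteq> 0"
  proof (rule AE_I')
    show "(\<Union>n\<in>{n. mM n = 0}. fst -` (c -` {n})) \<in> null_sets g2"
      by (rule null_sets_UN') (auto simp: null_sets_def pre2[OF cb] ms2[OF cb] mM_def)
  qed (auto simp: sp2)
  have marg1: "(\<integral>\<^sup>+\<omega>. h (fst \<omega>) * w \<omega> \<partial>(g1 \<Otimes>\<^sub>M g2)) = (\<integral>\<^sup>+a. h a \<partial>g1)"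
    if hm: "h \<in> borel_measurable g1" for h
  proof -
    have hm': "(\<lambda>\<omega>. h (fst \<omega>) * w \<omega>) \<in> borel_measurable (g1 \<Otimes>\<^sub>M g2)"
      using measurable_compose[OF measurable_fst hm] wm by measurable
    have "(\<integral>\<^sup>+\<omega>. h (fst \<omega>) * w \<omega> \<partial>(g1 \<Otimes>\<^sub>M g2)) = (\<integral>\<^sup>+a. \<integral>\<^sup>+b. h a * w (a, b) \<partial>g2 \<partial>g1)"
      using G2.nn_integral_fst[OF hm'] by simp
    also have "\<dots> = (\<integral>\<^sup>+a. h a * (\<integral>\<^sup>+b. w (a, b) \<partial>g2) \<partial>g1)"
      by (intro nn_integral_cong nn_integral_cmult measurable_Pair2[OF wm]) (simp add: sp1)
    also have "\<dots> = (\<integral>\<^sup>+a. h a \<partial>g1)"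
      by (rule nn_integral_cong_AE) (use AE1 in \<open>auto simp: inner1\<close>)
    finally show ?thesis .
  qed
  have marg2: "(\<integral>\<^sup>+\<omega>. h (snd \<omega>) * w \<omega> \<partial>(g1 \<Otimes>\<^sub>M g2)) = (\<integral>\<^sup>+b. h b \<partial>g2)"
    if hm: "h \<in> borel_measurable g2" for h
  proof -
    have hm': "(\<lambda>\<omega>. h (snd \<omega>) * w \<omega>) \<in> borel_measurable (g1 \<Otimes>\<^sub>M g2)"
      using measurable_compose[OF measurable_snd hm] wm by measurable
    have "(\<integral>\<^sup>+\<omega>. h (snd \<omega>) * w \<omega> \<partial>(g1 \<Otimes>\<^sub>M g2)) = (\<integral>\<^sup>+b. \<integral>\<^sup>+a. h b * w (a, b) \<partial>g1 \<partial>g2)"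
      using G12.nn_integral_snd[OF hm'] by simp
    also have "\<dots> = (\<integral>\<^sup>+b. h b * (\<integral>\<^sup>+a. w (a, b) \<partial>g1) \<partial>g2)"
      by (intro nn_integral_cong nn_integral_cmult measurable_Pair1[OF wm]) (simp add: sp2)
    also have "\<dots> = (\<integral>\<^sup>+b. h b \<partial>g2)"
      by (rule nn_integral_cong_AE) (use AE2 in \<open>auto simp: inner2\<close>)
    finally show ?thesis .
  qed
  define \<Gamma> where "\<Gamma> = density (g1 \<Otimes>\<^sub>M g2) w"
  have sG: "sets \<Gamma> = sets (g1 \<Otimes>\<^sub>M g2)" by (simp add: \<Gamma>_def)
  have spG: "space \<Gamma> = UNIV" by (simp add: \<Gamma>_def spp)
  have tot: "(\<integral>\<^sup>+\<omega>. w \<omega> \<partial>(g1 \<Otimes>\<^sub>M g2)) = 1"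
    using marg1[of "\<lambda>_. 1"] G1.emeasure_space_1 by (simp add: sp1)
  have pG: "prob_space \<Gamma>"
  proof (rule prob_spaceI)
    have "emeasure \<Gamma> (space (g1 \<Otimes>\<^sub>M g2)) = (\<integral>\<^sup>+\<omega>. w \<omega> * indicator (space (g1 \<Otimes>\<^sub>M g2)) \<omega> \<partial>(g1 \<Otimes>\<^sub>M g2))"
      unfolding \<Gamma>_def by (rule emeasure_density[OF wm]) simp
    also have "\<dots> = 1" using tot by (simp add: spp)
    finally show "emeasure \<Gamma> (space \<Gamma>) = 1" by (simp add: \<Gamma>_def)
  qed
  have dist1: "distr \<Gamma> (borel \<Otimes>\<^sub>M borel) fst = g1"
  proof (rule measure_eqI)
    show "sets (distr \<Gamma> (borel \<Otimes>\<^sub>M borel) fst) = sets g1" using s1 by simp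
    fix A assume "A \<in> sets (distr \<Gamma> (borel \<Otimes>\<^sub>M borel) fst)"
    then have A: "A \<in> sets g1" using s1 by simp
    have fm: "fst \<in> \<Gamma> \<rightarrow>\<^sub>M borel \<Otimes>\<^sub>M borel"
      using measurable_fst[of g1 g2] by (simp add: measurable_cong_sets[OF sG s1[symmetric]])
    have "emeasure (distr \<Gamma> (borel \<Otimes>\<^sub>M borel) fst) A = emeasure \<Gamma> (fst -` A)"
      using emeasure_distr[OF fm, of A] A s1 spG by simp
    also have "\<dots> = (\<integral>\<^sup>+\<omega>. w \<omega> * indicator (fst -` A) \<omega> \<partial>(g1 \<Otimes>\<^sub>M g2))"
      unfolding \<Gamma>_def by (rule emeasure_density[OF wm]) (use measurable_sets[OF measurable_fst[of g1 g2] A] spp in simp)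
    also have "\<dots> = (\<integral>\<^sup>+\<omega>. indicator A (fst \<omega>) * w \<omega> \<partial>(g1 \<Otimes>\<^sub>M g2))"
      by (intro nn_integral_cong) (simp add: indicator_def mult.commute)
    also have "\<dots> = emeasure g1 A" using marg1[of "indicator A"] A by simp
    finally show "emeasure (distr \<Gamma> (borel \<Otimes>\<^sub>M borel) fst) A = emeasure g1 A" .
  qed
  have dist2: "distr \<Gamma> (borel \<Otimes>\<^sub>M borel) snd = g2"
  proof (rule measure_eqI)
    show "sets (distr \<Gamma> (borel \<Otimes>\<^sub>M borel) snd) = sets g2" using s2 by simp
    fix A assume "A \<in> sets (distr \<Gamma> (borel \<Otimes>\<^sub>M borel) snd)"
    then have A: "A \<in> sets g2" using s2 by simp
    have fm: "snd \<in> \<Gamma> \<rightarrow>\<^sub>M borel \<Otimes>\<^sub>M borel"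
      using measurable_snd[of g1 g2] by (simp add: measurable_cong_sets[OF sG s2[symmetric]])
    have "emeasure (distr \<Gamma> (borel \<Otimes>\<^sub>M borel) snd) A = emeasure \<Gamma> (snd -` A)"
      using emeasure_distr[OF fm, of A] A s2 spG by simp
    also have "\<dots> = (\<integral>\<^sup>+\<omega>. w \<omega> * indicator (snd -` A) \<omega> \<partial>(g1 \<Otimes>\<^sub>M g2))"
      unfolding \<Gamma>_def by (rule emeasure_density[OF wm]) (use measurable_sets[OF measurable_snd[of g1 g2] A] spp in simp)
    also have "\<dots> = (\<integral>\<^sup>+\<omega>. indicator A (snd \<omega>) * w \<omega> \<partial>(g1 \<Otimes>\<^sub>M g2))"
      by (intro nn_integral_cong) (simp add: indicator_def mult.commute)
    also have "\<dots> = emeasure g2 A" using marg2[of "indicator A"] A by simp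
    finally show "emeasure (distr \<Gamma> (borel \<Otimes>\<^sub>M borel) snd) A = emeasure g2 A" .
  qed
  define D where "D \<omega> = (norm (snd (fst \<omega>) - fst (snd \<omega>)))\<^sup>2" for \<omega> :: "('b \<times> 'b) \<times> ('b \<times> 'b)"
  have Dm: "D \<in> borel_measurable (g1 \<Otimes>\<^sub>M g2)"
    unfolding D_def using zm z'm by measurable
  have DmG: "D \<in> borel_measurable \<Gamma>" using Dm by (simp add: measurable_cong_sets[OF sG refl])
  have nnD: "(\<integral>\<^sup>+\<omega>. ennreal (D \<omega>) \<partial>\<Gamma>) \<le> ennreal (dl\<^sup>2)"
  proof -
    have "(\<integral>\<^sup>+\<omega>. ennreal (D \<omega>) \<partial>\<Gamma>) = (\<integral>\<^sup>+\<omega>. w \<omega> * ennreal (D \<omega>) \<partial>(g1 \<Otimes>\<^sub>M g2))"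
      unfolding \<Gamma>_def by (rule nn_integral_density[OF wm]) (use Dm in measurable)
    also have "\<dots> \<le> (\<integral>\<^sup>+\<omega>. ennreal (dl\<^sup>2) * w \<omega> \<partial>(g1 \<Otimes>\<^sub>M g2))"
    proof (rule nn_integral_mono)
      fix \<omega> :: "('b \<times> 'b) \<times> ('b \<times> 'b)"
      show "w \<omega> * ennreal (D \<omega>) \<le> ennreal (dl\<^sup>2) * w \<omega>"
      proof (cases "c (snd (fst \<omega>)) = c (fst (snd \<omega>))")
        case True
        have "D \<omega> \<le> dl\<^sup>2" unfolding D_def
          using cdist[OF True] dl by (intro power_mono) (auto simp: dist_norm)
        then have "ennreal (D \<omega>) \<le> ennreal (dl\<^sup>2)" by (rule ennreal_leI)
        then show ?thesis by (simp add: mult.commute mult_left_mono)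
      next
        case False
        then show ?thesis by (simp add: w_def)
      qed
    qed
    also have "\<dots> = ennreal (dl\<^sup>2)" using nn_integral_cmult[OF wm, of "ennreal (dl\<^sup>2)"] tot by simp
    finally show ?thesis .
  qed
  have iD: "integrable \<Gamma> D"
    by (rule integrableI_nonneg[OF DmG]) (use nnD in \<open>auto simp: D_def intro: le_less_trans\<close>)
  have "(\<integral>\<omega>. D \<omega> \<partial>\<Gamma>) \<le> dl\<^sup>2"
  proof -
    have "(\<integral>\<omega>. D \<omega> \<partial>\<Gamma>) = enn2real (\<integral>\<^sup>+\<omega>. ennreal (D \<omega>) \<partial>\<Gamma>)"
      by (rule integral_eq_nn_integral[OF DmG]) (simp add: D_def)
    also have "\<dots> \<le> enn2real (ennreal (dl\<^sup>2))" using nnD by (intro enn2real_mono) auto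
    finally show ?thesis by simp
  qed
  then show ?thesis using pG sG dist1 dist2 iD unfolding D_def by blast
qed

lemma prod_coupling:
  fixes P M :: "'b::euclidean_space measure"
  assumes pP: "prob_space P" and sP: "sets P = sets borel" and pM: "prob_space M" and sM: "sets M = sets borel"
  shows "P \<Otimes>\<^sub>M M \<in> couplings P M"
proof -
  interpret PP: prob_space P by fact
  interpret MM: prob_space M by fact
  interpret PM: pair_prob_space P M by unfold_locales
  have spP: "space P = UNIV" using sets_eq_imp_space_eq[OF sP] by simp
  have spM: "space M = UNIV" using sets_eq_imp_space_eq[OF sM] by simp
  have d1: "distr (P \<Otimes>\<^sub>M M) borel fst = P"
  proof (intro measure_eqI)
    show "sets (distr (P \<Otimes>\<^sub>M M) borel fst) = sets P" using sP by simp
    fix A assume A: "A \<in> sets (distr (P \<Otimes>\<^sub>M M) borel fst)"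
    then have AP: "A \<in> sets P" using sP by simp
    have fm: "fst \<in> (P \<Otimes>\<^sub>M M) \<rightarrow>\<^sub>M borel"
      using measurable_fst[of P M] by (simp add: measurable_cong_sets[OF refl sP])
    have "emeasure (distr (P \<Otimes>\<^sub>M M) borel fst) A = emeasure (P \<Otimes>\<^sub>M M) (A \<times> space M)"
      using A fm by (auto simp add: emeasure_distr space_pair_measure spP spM intro!: arg_cong2[where f=emeasure])
    then show "emeasure (distr (P \<Otimes>\<^sub>M M) borel fst) A = emeasure P A"
      using MM.emeasure_pair_measure_Times[OF AP sets.top[of M]] MM.emeasure_space_1 by simp
  qed
  have d2: "distr (P \<Otimes>\<^sub>M M) borel snd = M"
  proof (intro measure_eqI)
    show "sets (distr (P \<Otimes>\<^sub>M M) borel snd) = sets M" using sM by simp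
    fix A assume A: "A \<in> sets (distr (P \<Otimes>\<^sub>M M) borel snd)"
    then have AM: "A \<in> sets M" using sM by simp
    have fm: "snd \<in> (P \<Otimes>\<^sub>M M) \<rightarrow>\<^sub>M borel"
      using measurable_snd[of P M] by (simp add: measurable_cong_sets[OF refl sM])
    have "emeasure (distr (P \<Otimes>\<^sub>M M) borel snd) A = emeasure (P \<Otimes>\<^sub>M M) (space P \<times> A)"
      using A fm by (auto simp add: emeasure_distr space_pair_measure spP spM intro!: arg_cong2[where f=emeasure])
    then show "emeasure (distr (P \<Otimes>\<^sub>M M) borel snd) A = emeasure M A"
      using MM.emeasure_pair_measure_Times[OF sets.top[of P] AM] PP.emeasure_space_1 by simp
  qed
  have "prob_space (P \<Otimes>\<^sub>M M)" by (rule PM.prob_space_axioms)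
  moreover have "sets (P \<Otimes>\<^sub>M M) = sets (borel \<Otimes>\<^sub>M borel)"
    by (rule sets_pair_measure_cong[OF sP sM])
  ultimately show ?thesis using d1 d2 unfolding couplings_def by blast
qed

lemma W2_approx:
  fixes P M :: "'b::euclidean_space measure"
  assumes pP: "prob_space P" and sP: "sets P = sets borel" and pM: "prob_space M" and sM: "sets M = sets borel"
    and mP: "integrable P (\<lambda>x. (norm x)\<^sup>2)" and mM: "integrable M (\<lambda>x. (norm x)\<^sup>2)"
    and e: "e > 0"
  shows "\<exists>\<gamma>\<in>couplings P M. integrable \<gamma> (\<lambda>z. (norm (fst z - snd z))\<^sup>2) \<and>
            (\<integral>z. (norm (fst z - snd z))\<^sup>2 \<partial>\<gamma>) \<le> W2sq P M + e"
proof -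
  interpret PP: prob_space P by fact
  interpret MM: prob_space M by fact
  interpret PM: pair_prob_space P M by unfold_locales
  define I where "I = (\<Sqinter>\<gamma>\<in>couplings P M. \<integral>\<^sup>+ z. ennreal ((norm (fst z - snd z))\<^sup>2) \<partial>\<gamma>)"
  have W: "W2sq P M = enn2real I" unfolding W2sq_def I_def ..
  have pc: "P \<Otimes>\<^sub>M M \<in> couplings P M" by (rule prod_coupling[OF pP sP pM sM])
  have mPm: "(\<lambda>x. (norm x)\<^sup>2) \<in> borel_measurable P" by (simp add: measurable_cong_sets[OF sP refl])
  have mMm: "(\<lambda>x. (norm x)\<^sup>2) \<in> borel_measurable M" by (simp add: measurable_cong_sets[OF sM refl])
  have fP: "(\<integral>\<^sup>+x. ennreal ((norm x)\<^sup>2) \<partial>P) < \<infinity>"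
    using mP by (simp add: integrable_iff_bounded)
  have fM: "(\<integral>\<^sup>+x. ennreal ((norm x)\<^sup>2) \<partial>M) < \<infinity>"
    using mM by (simp add: integrable_iff_bounded)
  have prodfin: "(\<integral>\<^sup>+ z. ennreal ((norm (fst z - snd z))\<^sup>2) \<partial>(P \<Otimes>\<^sub>M M)) < \<infinity>"
  proof -
    have pw: "ennreal ((norm (x - y))\<^sup>2) \<le> 2 * ennreal ((norm x)\<^sup>2) + 2 * ennreal ((norm y)\<^sup>2)" for x y :: 'b
    proof -
      have "norm (x - y) \<le> norm x + norm y" by (rule norm_triangle_ineq4)
      then have "(norm (x - y))\<^sup>2 \<le> (norm x + norm y)\<^sup>2" by (intro power_mono) auto
      also have "\<dots> \<le> 2 * (norm x)\<^sup>2 + 2 * (norm y)\<^sup>2"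
        using sq_prod_le[of "norm x" "norm y"] by (simp add: power2_eq_square algebra_simps)
      finally have "ennreal ((norm (x - y))\<^sup>2) \<le> ennreal (2 * (norm x)\<^sup>2 + 2 * (norm y)\<^sup>2)"
        by (rule ennreal_leI)
      also have "\<dots> = 2 * ennreal ((norm x)\<^sup>2) + 2 * ennreal ((norm y)\<^sup>2)"
        by (simp add: ennreal_plus ennreal_mult)
      finally show ?thesis .
    qed
    have m2: "(\<lambda>z. 2 * ennreal ((norm (fst z))\<^sup>2) + 2 * ennreal ((norm (snd z))\<^sup>2)) \<in> borel_measurable (P \<Otimes>\<^sub>M M)"
      using mPm mMm by measurable
    have "(\<integral>\<^sup>+ z. ennreal ((norm (fst z - snd z))\<^sup>2) \<partial>(P \<Otimes>\<^sub>M M))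
        \<le> (\<integral>\<^sup>+ z. 2 * ennreal ((norm (fst z))\<^sup>2) + 2 * ennreal ((norm (snd z))\<^sup>2) \<partial>(P \<Otimes>\<^sub>M M))"
      by (rule nn_integral_mono) (rule pw)
    also have "\<dots> = (\<integral>\<^sup>+x. \<integral>\<^sup>+y. 2 * ennreal ((norm x)\<^sup>2) + 2 * ennreal ((norm y)\<^sup>2) \<partial>M \<partial>P)"
      using MM.nn_integral_fst[OF m2] by simp
    also have "\<dots> = (\<integral>\<^sup>+x. 2 * ennreal ((norm x)\<^sup>2) + 2 * (\<integral>\<^sup>+y. ennreal ((norm y)\<^sup>2) \<partial>M) \<partial>P)"
    proof (intro nn_integral_cong)
      fix x :: 'b
      have "(\<integral>\<^sup>+y. 2 * ennreal ((norm x)\<^sup>2) + 2 * ennreal ((norm y)\<^sup>2) \<partial>M)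
          = (\<integral>\<^sup>+y. 2 * ennreal ((norm x)\<^sup>2) \<partial>M) + (\<integral>\<^sup>+y. 2 * ennreal ((norm y)\<^sup>2) \<partial>M)"
        by (rule nn_integral_add) (use mMm in auto)
      also have "\<dots> = 2 * ennreal ((norm x)\<^sup>2) + 2 * (\<integral>\<^sup>+y. ennreal ((norm y)\<^sup>2) \<partial>M)"
        using mMm by (simp add: nn_integral_cmult MM.emeasure_space_1)
      finally show "(\<integral>\<^sup>+y. 2 * ennreal ((norm x)\<^sup>2) + 2 * ennreal ((norm y)\<^sup>2) \<partial>M)
          = 2 * ennreal ((norm x)\<^sup>2) + 2 * (\<integral>\<^sup>+y. ennreal ((norm y)\<^sup>2) \<partial>M)" .
    qed
    also have "\<dots> = 2 * (\<integral>\<^sup>+x. ennreal ((norm x)\<^sup>2) \<partial>P) + 2 * (\<integral>\<^sup>+y. ennreal ((norm y)\<^sup>2) \<partial>M)"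
    proof -
      have "(\<integral>\<^sup>+x. 2 * ennreal ((norm x)\<^sup>2) + 2 * (\<integral>\<^sup>+y. ennreal ((norm y)\<^sup>2) \<partial>M) \<partial>P)
          = (\<integral>\<^sup>+x. 2 * ennreal ((norm x)\<^sup>2) \<partial>P) + (\<integral>\<^sup>+x. 2 * (\<integral>\<^sup>+y. ennreal ((norm y)\<^sup>2) \<partial>M) \<partial>P)"
        by (rule nn_integral_add) (use mPm in auto)
      also have "\<dots> = 2 * (\<integral>\<^sup>+x. ennreal ((norm x)\<^sup>2) \<partial>P) + 2 * (\<integral>\<^sup>+y. ennreal ((norm y)\<^sup>2) \<partial>M)"
        using mPm by (simp add: nn_integral_cmult PP.emeasure_space_1)
      finally show ?thesis .
    qed
    also have "\<dots> < \<infinity>" using fP fM by (simp add: ennreal_mult_less_top)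
    finally show ?thesis .
  qed
  have Ifin: "I < \<infinity>"
  proof -
    have "I \<le> (\<integral>\<^sup>+ z. ennreal ((norm (fst z - snd z))\<^sup>2) \<partial>(P \<Otimes>\<^sub>M M))"
      unfolding I_def by (rule INF_lower[OF pc])
    then show ?thesis using prodfin by (rule le_less_trans)
  qed
  have "I < ennreal (W2sq P M + e)"
  proof -
    have "I = ennreal (enn2real I)" using Ifin by simp
    also have "\<dots> < ennreal (enn2real I + e)" using e by (simp add: ennreal_lessI)
    finally show ?thesis using W by simp
  qed
  then obtain \<gamma> where g: "\<gamma> \<in> couplings P M"
      "(\<integral>\<^sup>+ z. ennreal ((norm (fst z - snd z))\<^sup>2) \<partial>\<gamma>) < ennreal (W2sq P M + e)"
    unfolding I_def INF_less_iff by blast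
  have sg: "sets \<gamma> = sets (borel \<Otimes>\<^sub>M borel)" using g(1) unfolding couplings_def by auto
  have gm: "(\<lambda>z. (norm (fst z - snd z))\<^sup>2) \<in> borel_measurable \<gamma>"
    by (simp add: measurable_cong_sets[OF sg refl])
  have ig: "integrable \<gamma> (\<lambda>z. (norm (fst z - snd z))\<^sup>2)"
    by (rule integrableI_nonneg[OF gm]) (use g(2) in \<open>auto intro: less_trans\<close>)
  have "(\<integral>z. (norm (fst z - snd z))\<^sup>2 \<partial>\<gamma>) = enn2real (\<integral>\<^sup>+ z. ennreal ((norm (fst z - snd z))\<^sup>2) \<partial>\<gamma>)"
    by (rule integral_eq_nn_integral[OF gm]) simp
  also have "\<dots> \<le> enn2real (ennreal (W2sq P M + e))"
    using g(2) by (intro enn2real_mono) auto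
  also have "\<dots> = W2sq P M + e"
    by (rule enn2real_ennreal) (use e W enn2real_nonneg[of I] in linarith)
  finally show ?thesis using g(1) ig by blast
qed

lemma J_bound:
  fixes p q :: "'b::euclidean_space \<Rightarrow> real" and Gp Gq :: "'b \<Rightarrow> 'b" and \<Gamma> :: "'w measure"
    and X Y :: "'w \<Rightarrow> 'b"
  assumes pm: "p \<in> borel_measurable borel" and qm: "q \<in> borel_measurable borel"
    and ppos: "\<And>x. p x > 0" and qpos: "\<And>x. q x > 0"
    and Pp: "prob_space (density lborel (\<lambda>x. ennreal (p x)))"
    and Qp: "prob_space (density lborel (\<lambda>x. ennreal (q x)))"
    and gp: "\<And>x. ((\<lambda>y. log 2 (p y)) has_derivative (\<lambda>v. Gp x \<bullet> v)) (at x)"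
    and gpb: "\<And>x. norm (Gp x) \<le> c1 * norm x + c2"
    and gq: "\<And>x. ((\<lambda>y. log 2 (q y)) has_derivative (\<lambda>v. Gq x \<bullet> v)) (at x)"
    and gqb: "\<And>x. norm (Gq x) \<le> c1 * norm x + c2"
    and c1: "c1 \<ge> 0"
    and mp: "integrable (density lborel (\<lambda>x. ennreal (p x))) (\<lambda>x. (norm x)\<^sup>2)"
    and mq: "integrable (density lborel (\<lambda>x. ennreal (q x))) (\<lambda>x. (norm x)\<^sup>2)"
    and pG: "prob_space \<Gamma>" and Xm: "X \<in> \<Gamma> \<rightarrow>\<^sub>M borel" and Ym: "Y \<in> \<Gamma> \<rightarrow>\<^sub>M borel"
    and dX: "distr \<Gamma> borel X = density lborel (\<lambda>x. ennreal (p x))"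
    and dY: "distr \<Gamma> borel Y = density lborel (\<lambda>x. ennreal (q x))"
    and iD: "integrable \<Gamma> (\<lambda>\<omega>. (norm (X \<omega> - Y \<omega>))\<^sup>2)"
  shows J_bound_int: "integrable lborel (\<lambda>x. (p x - q x) * (ln (p x) - ln (q x)))"
    and J_bound_le: "(\<integral>x. (p x - q x) * (ln (p x) - ln (q x)) \<partial>lborel) \<le>
        (c1 * (sqrt (\<integral>x. (norm x)\<^sup>2 \<partial>density lborel (\<lambda>x. ennreal (p x)))
             + sqrt (\<integral>x. (norm x)\<^sup>2 \<partial>density lborel (\<lambda>x. ennreal (q x)))) + 2 * c2)
        * sqrt (\<integral>\<omega>. (norm (X \<omega> - Y \<omega>))\<^sup>2 \<partial>\<Gamma>)"
proof -
  interpret G: prob_space \<Gamma> by fact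
  define P where "P = density lborel (\<lambda>x. ennreal (p x))"
  define Q where "Q = density lborel (\<lambda>x. ennreal (q x))"
  interpret PP: prob_space P unfolding P_def by fact
  interpret QQ: prob_space Q unfolding Q_def by fact
  have bP: "borel_measurable P = borel_measurable borel" unfolding P_def by (rule measurable_cong_sets) auto
  have bQ: "borel_measurable Q = borel_measurable borel" unfolding Q_def by (rule measurable_cong_sets) auto
  define F where "F x = log 2 (p x) - log 2 (q x)" for x
  have Fm: "F \<in> borel_measurable borel" unfolding F_def using pm qm by measurable
  have c2: "c2 \<ge> 0" using gpb[of 0] by (simp add: order_trans[OF norm_ge_zero])
  have seg: "\<bar>F x - F y\<bar> \<le> (c1 * (norm x + norm y) + 2 * c2) * norm (x - y)" for x y
  proof -
    have a: "\<bar>log 2 (p x) - log 2 (p y)\<bar> \<le> (c1 * (norm x + norm y) / 2 + c2) * norm (x - y)"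
      by (rule log_segment[OF gp gpb c1])
    have b: "\<bar>log 2 (q x) - log 2 (q y)\<bar> \<le> (c1 * (norm x + norm y) / 2 + c2) * norm (x - y)"
      by (rule log_segment[OF gq gqb c1])
    have "\<bar>F x - F y\<bar> \<le> \<bar>log 2 (p x) - log 2 (p y)\<bar> + \<bar>log 2 (q x) - log 2 (q y)\<bar>"
      unfolding F_def by linarith
    also have "\<dots> \<le> 2 * ((c1 * (norm x + norm y) / 2 + c2) * norm (x - y))" using a b by linarith
    also have "\<dots> = (c1 * (norm x + norm y) + 2 * c2) * norm (x - y)" by (simp add: algebra_simps)
    finally show ?thesis .
  qed
  have Fb: "\<bar>F x\<bar> \<le> \<bar>F 0\<bar> + c2 + (c1 + c2) * (norm x)\<^sup>2" for x
  proof -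
    have "\<bar>F x - F 0\<bar> \<le> (c1 * norm x + 2 * c2) * norm x" using seg[of x 0] by simp
    also have "\<dots> = c1 * (norm x)\<^sup>2 + c2 * (2 * norm x)" by (simp add: power2_eq_square algebra_simps)
    also have "\<dots> \<le> c1 * (norm x)\<^sup>2 + c2 * (1 + (norm x)\<^sup>2)"
    proof -
      have "2 * norm x \<le> 1 + (norm x)\<^sup>2" using sq_prod_le[of "norm x" 1] by simp
      then show ?thesis using c2 by (intro add_left_mono mult_left_mono) auto
    qed
    finally show ?thesis by (simp add: algebra_simps)
  qed
  have iFP: "integrable P F"
  proof (rule Bochner_Integration.integrable_bound)
    show "integrable P (\<lambda>x. \<bar>F 0\<bar> + c2 + (c1 + c2) * (norm x)\<^sup>2)"
      using mp unfolding P_def[symmetric] by auto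
    show "F \<in> borel_measurable P" using Fm unfolding P_def by (simp add: measurable_cong_sets[OF sets_density refl])
    show "AE x in P. norm (F x) \<le> norm (\<bar>F 0\<bar> + c2 + (c1 + c2) * (norm x)\<^sup>2)"
      using Fb c1 c2 by (auto intro!: AE_I2 order_trans[OF _ abs_ge_self])
  qed
  have iFQ: "integrable Q F"
  proof (rule Bochner_Integration.integrable_bound)
    show "integrable Q (\<lambda>x. \<bar>F 0\<bar> + c2 + (c1 + c2) * (norm x)\<^sup>2)"
      using mq unfolding Q_def[symmetric] by auto
    show "F \<in> borel_measurable Q" using Fm unfolding Q_def by (simp add: measurable_cong_sets[OF sets_density refl])
    show "AE x in Q. norm (F x) \<le> norm (\<bar>F 0\<bar> + c2 + (c1 + c2) * (norm x)\<^sup>2)"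
      using Fb c1 c2 by (auto intro!: AE_I2 order_trans[OF _ abs_ge_self])
  qed
  have FmL: "F \<in> borel_measurable lborel" using Fm by simp
  have pmL: "p \<in> borel_measurable lborel" using pm by simp
  have qmL: "q \<in> borel_measurable lborel" using qm by simp
  have ipF: "integrable lborel (\<lambda>x. p x * F x)"
    using iFP integrable_density[OF FmL pmL] ppos unfolding P_def by (simp add: less_imp_le)
  have iqF: "integrable lborel (\<lambda>x. q x * F x)"
    using iFQ integrable_density[OF FmL qmL] qpos unfolding Q_def by (simp add: less_imp_le)
  have IP: "(\<integral>x. F x \<partial>P) = (\<integral>x. p x * F x \<partial>lborel)"
    using integral_density[OF FmL pmL] ppos unfolding P_def by (simp add: less_imp_le)
  have IQ: "(\<integral>x. F x \<partial>Q) = (\<integral>x. q x * F x \<partial>lborel)"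
    using integral_density[OF FmL qmL] qpos unfolding Q_def by (simp add: less_imp_le)
  have ln2: "ln (2::real) > 0" by simp
  have pw: "(p x - q x) * (ln (p x) - ln (q x)) = ln 2 * (p x * F x - q x * F x)" for x
    unfolding F_def log_def by (simp add: field_simps)
  show iJ: "integrable lborel (\<lambda>x. (p x - q x) * (ln (p x) - ln (q x)))"
    unfolding pw using ipF iqF by auto
  have Jeq: "(\<integral>x. (p x - q x) * (ln (p x) - ln (q x)) \<partial>lborel) = ln 2 * ((\<integral>x. F x \<partial>P) - (\<integral>x. F x \<partial>Q))"
    unfolding pw IP IQ using ipF iqF by simp
  have J0: "(\<integral>x. (p x - q x) * (ln (p x) - ln (q x)) \<partial>lborel) \<ge> 0"
  proof (rule integral_nonneg_AE, rule AE_I2)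
    fix x
    show "0 \<le> (p x - q x) * (ln (p x) - ln (q x))"
      using ppos[of x] qpos[of x]
      by (cases "p x \<le> q x") (auto intro: mult_nonpos_nonpos mult_nonneg_nonneg)
  qed
  have PX: "(\<integral>x. F x \<partial>P) = (\<integral>\<omega>. F (X \<omega>) \<partial>\<Gamma>)"
    using integral_distr[OF Xm Fm] dX unfolding P_def by simp
  have QY: "(\<integral>x. F x \<partial>Q) = (\<integral>\<omega>. F (Y \<omega>) \<partial>\<Gamma>)"
    using integral_distr[OF Ym Fm] dY unfolding Q_def by simp
  have iFX: "integrable \<Gamma> (\<lambda>\<omega>. F (X \<omega>))"
    using integrable_distr_eq[OF Xm Fm] dX iFP unfolding P_def by simp
  have iFY: "integrable \<Gamma> (\<lambda>\<omega>. F (Y \<omega>))"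
    using integrable_distr_eq[OF Ym Fm] dY iFQ unfolding Q_def by simp
  have n2m: "(\<lambda>x::'b. (norm x)\<^sup>2) \<in> borel_measurable borel" by measurable
  have iX2: "integrable \<Gamma> (\<lambda>\<omega>. (norm (X \<omega>))\<^sup>2)"
    using integrable_distr_eq[OF Xm n2m] dX mp by simp
  have iY2: "integrable \<Gamma> (\<lambda>\<omega>. (norm (Y \<omega>))\<^sup>2)"
    using integrable_distr_eq[OF Ym n2m] dY mq by simp
  have aX: "(\<integral>\<omega>. (norm (X \<omega>))\<^sup>2 \<partial>\<Gamma>) = (\<integral>x. (norm x)\<^sup>2 \<partial>P)"
    using integral_distr[OF Xm n2m] dX unfolding P_def by simp
  have aY: "(\<integral>\<omega>. (norm (Y \<omega>))\<^sup>2 \<partial>\<Gamma>) = (\<integral>x. (norm x)\<^sup>2 \<partial>Q)"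
    using integral_distr[OF Ym n2m] dY unfolding Q_def by simp
  have nXm: "(\<lambda>\<omega>. norm (X \<omega>)) \<in> borel_measurable \<Gamma>" using Xm by measurable
  have nYm: "(\<lambda>\<omega>. norm (Y \<omega>)) \<in> borel_measurable \<Gamma>" using Ym by measurable
  have nDm: "(\<lambda>\<omega>. norm (X \<omega> - Y \<omega>)) \<in> borel_measurable \<Gamma>" using Xm Ym by measurable
  have i1: "integrable \<Gamma> (\<lambda>\<omega>. (1::real)\<^sup>2)" by simp
  define \<Delta> where "\<Delta> = (\<integral>\<omega>. (norm (X \<omega> - Y \<omega>))\<^sup>2 \<partial>\<Gamma>)"
  have csX: "(\<integral>\<omega>. norm (X \<omega>) * norm (X \<omega> - Y \<omega>) \<partial>\<Gamma>) \<le> sqrt (\<integral>x. (norm x)\<^sup>2 \<partial>P) * sqrt \<Delta>"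
    using cs_ineq[OF nXm nDm iX2 iD] aX by (simp add: \<Delta>_def)
  have csY: "(\<integral>\<omega>. norm (Y \<omega>) * norm (X \<omega> - Y \<omega>) \<partial>\<Gamma>) \<le> sqrt (\<integral>x. (norm x)\<^sup>2 \<partial>Q) * sqrt \<Delta>"
    using cs_ineq[OF nYm nDm iY2 iD] aY by (simp add: \<Delta>_def)
  have cs1: "(\<integral>\<omega>. 1 * norm (X \<omega> - Y \<omega>) \<partial>\<Gamma>) \<le> sqrt (\<integral>\<omega>. (1::real)\<^sup>2 \<partial>\<Gamma>) * sqrt \<Delta>"
    using cs_ineq[OF _ nDm i1 iD] by (simp add: \<Delta>_def)
  have icsX: "integrable \<Gamma> (\<lambda>\<omega>. norm (X \<omega>) * norm (X \<omega> - Y \<omega>))" by (rule cs_integrable[OF nXm nDm iX2 iD])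
  have icsY: "integrable \<Gamma> (\<lambda>\<omega>. norm (Y \<omega>) * norm (X \<omega> - Y \<omega>))" by (rule cs_integrable[OF nYm nDm iY2 iD])
  have ics1: "integrable \<Gamma> (\<lambda>\<omega>. 1 * norm (X \<omega> - Y \<omega>))" by (rule cs_integrable[OF _ nDm i1 iD]) simp
  have "(\<integral>x. F x \<partial>P) - (\<integral>x. F x \<partial>Q) = (\<integral>\<omega>. F (X \<omega>) - F (Y \<omega>) \<partial>\<Gamma>)"
    unfolding PX QY using iFX iFY by simp
  also have "\<dots> \<le> (\<integral>\<omega>. c1 * (norm (X \<omega>) * norm (X \<omega> - Y \<omega>)) + c1 * (norm (Y \<omega>) * norm (X \<omega> - Y \<omega>))
                    + 2 * c2 * (1 * norm (X \<omega> - Y \<omega>)) \<partial>\<Gamma>)"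
  proof (rule integral_mono)
    show "integrable \<Gamma> (\<lambda>\<omega>. F (X \<omega>) - F (Y \<omega>))" using iFX iFY by simp
    show "integrable \<Gamma> (\<lambda>\<omega>. c1 * (norm (X \<omega>) * norm (X \<omega> - Y \<omega>)) + c1 * (norm (Y \<omega>) * norm (X \<omega> - Y \<omega>))
                    + 2 * c2 * (1 * norm (X \<omega> - Y \<omega>)))"
      using icsX icsY ics1 by auto
    fix \<omega>
    have "F (X \<omega>) - F (Y \<omega>) \<le> \<bar>F (X \<omega>) - F (Y \<omega>)\<bar>" by simp
    also have "\<dots> \<le> (c1 * (norm (X \<omega>) + norm (Y \<omega>)) + 2 * c2) * norm (X \<omega> - Y \<omega>)" by (rule seg)
    also have "\<dots> = c1 * (norm (X \<omega>) * norm (X \<omega> - Y \<omega>)) + c1 * (norm (Y \<omega>) * norm (X \<omega> - Y \<omega>))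
                    + 2 * c2 * (1 * norm (X \<omega> - Y \<omega>))" by (simp add: algebra_simps)
    finally show "F (X \<omega>) - F (Y \<omega>) \<le> c1 * (norm (X \<omega>) * norm (X \<omega> - Y \<omega>)) + c1 * (norm (Y \<omega>) * norm (X \<omega> - Y \<omega>))
                    + 2 * c2 * (1 * norm (X \<omega> - Y \<omega>))" .
  qed
  also have "\<dots> = c1 * (\<integral>\<omega>. norm (X \<omega>) * norm (X \<omega> - Y \<omega>) \<partial>\<Gamma>) + c1 * (\<integral>\<omega>. norm (Y \<omega>) * norm (X \<omega> - Y \<omega>) \<partial>\<Gamma>)
                    + 2 * c2 * (\<integral>\<omega>. 1 * norm (X \<omega> - Y \<omega>) \<partial>\<Gamma>)"
    using icsX icsY ics1 by simp
  also have "\<dots> \<le> c1 * (sqrt (\<integral>x. (norm x)\<^sup>2 \<partial>P) * sqrt \<Delta>) + c1 * (sqrt (\<integral>x. (norm x)\<^sup>2 \<partial>Q) * sqrt \<Delta>)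
                    + 2 * c2 * (1 * sqrt \<Delta>)"
    using csX csY cs1 c1 c2 G.prob_space by (intro add_mono mult_left_mono) auto
  also have "\<dots> = (c1 * (sqrt (\<integral>x. (norm x)\<^sup>2 \<partial>P) + sqrt (\<integral>x. (norm x)\<^sup>2 \<partial>Q)) + 2 * c2) * sqrt \<Delta>"
    by (simp add: algebra_simps)
  finally have Jb: "(\<integral>x. F x \<partial>P) - (\<integral>x. F x \<partial>Q) \<le> (c1 * (sqrt (\<integral>x. (norm x)\<^sup>2 \<partial>P) + sqrt (\<integral>x. (norm x)\<^sup>2 \<partial>Q)) + 2 * c2) * sqrt \<Delta>" .
  have JB0: "(\<integral>x. F x \<partial>P) - (\<integral>x. F x \<partial>Q) \<ge> 0"
    using J0 Jeq ln2 by (simp add: zero_le_mult_iff)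
  have "(\<integral>x. (p x - q x) * (ln (p x) - ln (q x)) \<partial>lborel) = ln 2 * ((\<integral>x. F x \<partial>P) - (\<integral>x. F x \<partial>Q))"
    by (rule Jeq)
  also have "\<dots> \<le> (\<integral>x. F x \<partial>P) - (\<integral>x. F x \<partial>Q)"
    using JB0 ln_2_less_1 mult_right_mono[of "ln 2" 1 "(\<integral>x. F x \<partial>P) - (\<integral>x. F x \<partial>Q)"] by simp
  also have "\<dots> \<le> (c1 * (sqrt (\<integral>x. (norm x)\<^sup>2 \<partial>P) + sqrt (\<integral>x. (norm x)\<^sup>2 \<partial>Q)) + 2 * c2) * sqrt \<Delta>"
    by (rule Jb)
  finally show "(\<integral>x. (p x - q x) * (ln (p x) - ln (q x)) \<partial>lborel) \<le>
        (c1 * (sqrt (\<integral>x. (norm x)\<^sup>2 \<partial>density lborel (\<lambda>x. ennreal (p x)))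
             + sqrt (\<integral>x. (norm x)\<^sup>2 \<partial>density lborel (\<lambda>x. ennreal (q x)))) + 2 * c2)
        * sqrt (\<integral>\<omega>. (norm (X \<omega> - Y \<omega>))\<^sup>2 \<partial>\<Gamma>)"
    unfolding P_def Q_def \<Delta>_def .
qed

lemma coupling_chain:
  fixes P M Q :: "'b::euclidean_space measure" and e :: real
  assumes pP: "prob_space P" and sP: "sets P = sets borel"
    and pM: "prob_space M" and sM: "sets M = sets borel"
    and pQ: "prob_space Q" and sQ: "sets Q = sets borel"
    and mP: "integrable P (\<lambda>x. (norm x)\<^sup>2)" and mM: "integrable M (\<lambda>x. (norm x)\<^sup>2)"
    and mQ: "integrable Q (\<lambda>x. (norm x)\<^sup>2)" and e: "e > 0"
  shows "\<exists>\<Gamma> :: (('b \<times> 'b) \<times> ('b \<times> 'b)) measure. prob_space \<Gamma> \<and>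
     (\<lambda>\<omega>. fst (fst \<omega>)) \<in> \<Gamma> \<rightarrow>\<^sub>M borel \<and> (\<lambda>\<omega>. snd (snd \<omega>)) \<in> \<Gamma> \<rightarrow>\<^sub>M borel \<and>
     distr \<Gamma> borel (\<lambda>\<omega>. fst (fst \<omega>)) = P \<and> distr \<Gamma> borel (\<lambda>\<omega>. snd (snd \<omega>)) = Q \<and>
     integrable \<Gamma> (\<lambda>\<omega>. (norm (fst (fst \<omega>) - snd (snd \<omega>)))\<^sup>2) \<and>
     sqrt (\<integral>\<omega>. (norm (fst (fst \<omega>) - snd (snd \<omega>)))\<^sup>2 \<partial>\<Gamma>) \<le> sqrt (W2sq P M + e) + sqrt (W2sq M Q + e) + e"
proof -
  obtain g1 where g1: "g1 \<in> couplings P M" "integrable g1 (\<lambda>z. (norm (fst z - snd z))\<^sup>2)"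
      "(\<integral>z. (norm (fst z - snd z))\<^sup>2 \<partial>g1) \<le> W2sq P M + e"
    using W2_approx[OF pP sP pM sM mP mM e] by blast
  obtain g2 where g2: "g2 \<in> couplings M Q" "integrable g2 (\<lambda>z. (norm (fst z - snd z))\<^sup>2)"
      "(\<integral>z. (norm (fst z - snd z))\<^sup>2 \<partial>g2) \<le> W2sq M Q + e"
    using W2_approx[OF pM sM pQ sQ mM mQ e] by blast
  obtain \<Gamma> where G: "prob_space \<Gamma>" "sets \<Gamma> = sets (g1 \<Otimes>\<^sub>M g2)"
      "distr \<Gamma> (borel \<Otimes>\<^sub>M borel) fst = g1" "distr \<Gamma> (borel \<Otimes>\<^sub>M borel) snd = g2"
      "integrable \<Gamma> (\<lambda>\<omega>. (norm (snd (fst \<omega>) - fst (snd \<omega>)))\<^sup>2)"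
      "(\<integral>\<omega>. (norm (snd (fst \<omega>) - fst (snd \<omega>)))\<^sup>2 \<partial>\<Gamma>) \<le> e\<^sup>2"
    using glue[OF g1(1) g2(1) e] by blast
  interpret GG: prob_space \<Gamma> by (rule G(1))
  have s1: "sets g1 = sets (borel \<Otimes>\<^sub>M borel)" using g1(1) unfolding couplings_def by auto
  have s2: "sets g2 = sets (borel \<Otimes>\<^sub>M borel)" using g2(1) unfolding couplings_def by auto
  have d1: "distr g1 borel fst = P" using g1(1) unfolding couplings_def by auto
  have d2: "distr g2 borel snd = Q" using g2(1) unfolding couplings_def by auto
  have sG: "sets \<Gamma> = sets ((borel \<Otimes>\<^sub>M borel) \<Otimes>\<^sub>M (borel \<Otimes>\<^sub>M borel))"
    using G(2) sets_pair_measure_cong[OF s1 s2] by simp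
  have fstm: "fst \<in> \<Gamma> \<rightarrow>\<^sub>M (borel \<Otimes>\<^sub>M borel)"
    by (simp add: measurable_cong_sets[OF sG refl])
  have sndm: "snd \<in> \<Gamma> \<rightarrow>\<^sub>M (borel \<Otimes>\<^sub>M borel)"
    by (simp add: measurable_cong_sets[OF sG refl])
  have f_b: "fst \<in> (borel \<Otimes>\<^sub>M borel) \<rightarrow>\<^sub>M (borel :: 'b measure)" by simp
  have s_b: "snd \<in> (borel \<Otimes>\<^sub>M borel) \<rightarrow>\<^sub>M (borel :: 'b measure)" by simp
  have Xm: "(\<lambda>\<omega>. fst (fst \<omega>)) \<in> \<Gamma> \<rightarrow>\<^sub>M borel" by (rule measurable_compose[OF fstm f_b])
  have Zm: "(\<lambda>\<omega>. snd (fst \<omega>)) \<in> \<Gamma> \<rightarrow>\<^sub>M borel" by (rule measurable_compose[OF fstm s_b])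
  have Z'm: "(\<lambda>\<omega>. fst (snd \<omega>)) \<in> \<Gamma> \<rightarrow>\<^sub>M borel" by (rule measurable_compose[OF sndm f_b])
  have Ym: "(\<lambda>\<omega>. snd (snd \<omega>)) \<in> \<Gamma> \<rightarrow>\<^sub>M borel" by (rule measurable_compose[OF sndm s_b])
  have dX: "distr \<Gamma> borel (\<lambda>\<omega>. fst (fst \<omega>)) = P"
  proof -
    have "distr \<Gamma> borel (\<lambda>\<omega>. fst (fst \<omega>)) = distr (distr \<Gamma> (borel \<Otimes>\<^sub>M borel) fst) borel fst"
      by (subst distr_distr[OF f_b fstm]) (simp add: o_def)
    then show ?thesis using G(3) d1 by simp
  qed
  have dY: "distr \<Gamma> borel (\<lambda>\<omega>. snd (snd \<omega>)) = Q"
  proof -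
    have "distr \<Gamma> borel (\<lambda>\<omega>. snd (snd \<omega>)) = distr (distr \<Gamma> (borel \<Otimes>\<^sub>M borel) snd) borel snd"
      by (subst distr_distr[OF s_b sndm]) (simp add: o_def)
    then show ?thesis using G(4) d2 by simp
  qed
  define n1 where "n1 \<omega> = norm (fst (fst \<omega>) - snd (fst \<omega>))" for \<omega> :: "('b \<times> 'b) \<times> ('b \<times> 'b)"
  define n2 where "n2 \<omega> = norm (snd (fst \<omega>) - fst (snd \<omega>))" for \<omega> :: "('b \<times> 'b) \<times> ('b \<times> 'b)"
  define n3 where "n3 \<omega> = norm (fst (snd \<omega>) - snd (snd \<omega>))" for \<omega> :: "('b \<times> 'b) \<times> ('b \<times> 'b)"
  have hm: "(\<lambda>z::'b \<times> 'b. (norm (fst z - snd z))\<^sup>2) \<in> borel_measurable (borel \<Otimes>\<^sub>M borel)" by measurable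
  have n1m: "n1 \<in> borel_measurable \<Gamma>" unfolding n1_def using Xm Zm by measurable
  have n2m: "n2 \<in> borel_measurable \<Gamma>" unfolding n2_def using Zm Z'm by measurable
  have n3m: "n3 \<in> borel_measurable \<Gamma>" unfolding n3_def using Z'm Ym by measurable
  have g1' : "integrable (distr \<Gamma> (borel \<Otimes>\<^sub>M borel) fst) (\<lambda>z. (norm (fst z - snd z))\<^sup>2)"
    using G(3) g1(2) by simp
  have i1: "integrable \<Gamma> (\<lambda>\<omega>. (n1 \<omega>)\<^sup>2)"
    using g1' integrable_distr_eq[OF fstm hm] unfolding n1_def by simp
  have g2' : "integrable (distr \<Gamma> (borel \<Otimes>\<^sub>M borel) snd) (\<lambda>z. (norm (fst z - snd z))\<^sup>2)"
    using G(4) g2(2) by simp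
  have i3: "integrable \<Gamma> (\<lambda>\<omega>. (n3 \<omega>)\<^sup>2)"
    using g2' integrable_distr_eq[OF sndm hm] unfolding n3_def by simp
  have i2: "integrable \<Gamma> (\<lambda>\<omega>. (n2 \<omega>)\<^sup>2)" using G(5) unfolding n2_def by simp
  have I1: "(\<integral>\<omega>. (n1 \<omega>)\<^sup>2 \<partial>\<Gamma>) \<le> W2sq P M + e"
    using integral_distr[OF fstm hm] G(3) g1(3) unfolding n1_def by simp
  have I3: "(\<integral>\<omega>. (n3 \<omega>)\<^sup>2 \<partial>\<Gamma>) \<le> W2sq M Q + e"
    using integral_distr[OF sndm hm] G(4) g2(3) unfolding n3_def by simp
  have I2: "(\<integral>\<omega>. (n2 \<omega>)\<^sup>2 \<partial>\<Gamma>) \<le> e\<^sup>2" using G(6) unfolding n2_def by simp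
  have n12m: "(\<lambda>\<omega>. n1 \<omega> + n2 \<omega>) \<in> borel_measurable \<Gamma>" using n1m n2m by measurable
  have i12: "integrable \<Gamma> (\<lambda>\<omega>. (n1 \<omega> + n2 \<omega>)\<^sup>2)" by (rule minkowski_integral(1)[OF n1m n2m i1 i2])
  have M12: "sqrt (\<integral>\<omega>. (n1 \<omega> + n2 \<omega>)\<^sup>2 \<partial>\<Gamma>) \<le> sqrt (\<integral>\<omega>. (n1 \<omega>)\<^sup>2 \<partial>\<Gamma>) + sqrt (\<integral>\<omega>. (n2 \<omega>)\<^sup>2 \<partial>\<Gamma>)"
    by (rule minkowski_integral(2)[OF n1m n2m i1 i2])
  have i123: "integrable \<Gamma> (\<lambda>\<omega>. (n1 \<omega> + n2 \<omega> + n3 \<omega>)\<^sup>2)" by (rule minkowski_integral(1)[OF n12m n3m i12 i3])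
  have M123: "sqrt (\<integral>\<omega>. (n1 \<omega> + n2 \<omega> + n3 \<omega>)\<^sup>2 \<partial>\<Gamma>) \<le> sqrt (\<integral>\<omega>. (n1 \<omega> + n2 \<omega>)\<^sup>2 \<partial>\<Gamma>) + sqrt (\<integral>\<omega>. (n3 \<omega>)\<^sup>2 \<partial>\<Gamma>)"
    by (rule minkowski_integral(2)[OF n12m n3m i12 i3])
  have pw: "(norm (fst (fst \<omega>) - snd (snd \<omega>)))\<^sup>2 \<le> (n1 \<omega> + n2 \<omega> + n3 \<omega>)\<^sup>2" for \<omega>
  proof -
    have "fst (fst \<omega>) - snd (snd \<omega>) = (fst (fst \<omega>) - snd (fst \<omega>)) + (snd (fst \<omega>) - fst (snd \<omega>)) + (fst (snd \<omega>) - snd (snd \<omega>))"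
      by simp
    then have "norm (fst (fst \<omega>) - snd (snd \<omega>)) \<le> n1 \<omega> + n2 \<omega> + n3 \<omega>"
      unfolding n1_def n2_def n3_def by (metis norm_triangle_le norm_triangle_ineq add_mono order_refl)
    then show ?thesis by (intro power_mono) auto
  qed
  have Dm: "(\<lambda>\<omega>. (norm (fst (fst \<omega>) - snd (snd \<omega>)))\<^sup>2) \<in> borel_measurable \<Gamma>" using Xm Ym by measurable
  have iD: "integrable \<Gamma> (\<lambda>\<omega>. (norm (fst (fst \<omega>) - snd (snd \<omega>)))\<^sup>2)"
    by (rule Bochner_Integration.integrable_bound[OF i123 Dm]) (use pw in auto)
  have "(\<integral>\<omega>. (norm (fst (fst \<omega>) - snd (snd \<omega>)))\<^sup>2 \<partial>\<Gamma>) \<le> (\<integral>\<omega>. (n1 \<omega> + n2 \<omega> + n3 \<omega>)\<^sup>2 \<partial>\<Gamma>)"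
    by (rule integral_mono[OF iD i123 pw])
  then have "sqrt (\<integral>\<omega>. (norm (fst (fst \<omega>) - snd (snd \<omega>)))\<^sup>2 \<partial>\<Gamma>) \<le> sqrt (\<integral>\<omega>. (n1 \<omega> + n2 \<omega> + n3 \<omega>)\<^sup>2 \<partial>\<Gamma>)"
    by (rule real_sqrt_le_mono)
  also have "\<dots> \<le> sqrt (\<integral>\<omega>. (n1 \<omega>)\<^sup>2 \<partial>\<Gamma>) + sqrt (\<integral>\<omega>. (n2 \<omega>)\<^sup>2 \<partial>\<Gamma>) + sqrt (\<integral>\<omega>. (n3 \<omega>)\<^sup>2 \<partial>\<Gamma>)"
    using M123 M12 by linarith
  also have "\<dots> \<le> sqrt (W2sq P M + e) + sqrt (e\<^sup>2) + sqrt (W2sq M Q + e)"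
    using I1 I2 I3 by (intro add_mono real_sqrt_le_mono)
  also have "\<dots> = sqrt (W2sq P M + e) + sqrt (W2sq M Q + e) + e" using e by simp
  finally show ?thesis using G(1) Xm Ym dX dY iD by blast
qed

lemma reg_extract:
  assumes "regular c1 c2 P"
  shows "\<exists>p G. p \<in> borel_measurable borel \<and> (\<forall>x. p x > 0) \<and> P = density lborel (\<lambda>x. ennreal (p x)) \<and>
    (\<forall>x. ((\<lambda>y. log 2 (p y)) has_derivative (\<lambda>v. G x \<bullet> v)) (at x)) \<and> (\<forall>x. norm (G x) \<le> c1 * norm x + c2)"
proof -
  obtain p where p: "p \<in> borel_measurable borel" "\<forall>x. p x > 0" "P = density lborel (\<lambda>x. ennreal (p x))"
      "\<forall>x. \<exists>grad. ((\<lambda>y. log 2 (p y)) has_derivative (\<lambda>v. grad \<bullet> v)) (at x) \<and> norm grad \<le> c1 * norm x + c2"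
    using assms unfolding regular_def by blast
  from choice[OF p(4)] obtain G where
    "\<forall>x. ((\<lambda>y. log 2 (p y)) has_derivative (\<lambda>v. G x \<bullet> v)) (at x) \<and> norm (G x) \<le> c1 * norm x + c2"
    by blast
  then show ?thesis using p(1,2,3) by blast
qed

lemma reg_c1:
  assumes "regular c1 c2 (P :: 'b::euclidean_space measure)" shows "c1 \<ge> 0"
proof (rule ccontr)
  assume "\<not> c1 \<ge> 0" then have c: "c1 < 0" by simp
  obtain p and G :: "'b \<Rightarrow> 'b" where G: "\<forall>x. norm (G x) \<le> c1 * norm x + (c2::real)"
    using reg_extract[OF assms] by blast
  obtain b :: 'b where b: "b \<in> Basis" using nonempty_Basis by blast
  define t where "t = (\<bar>c2\<bar> + 1) / (- c1)"
  have t: "t > 0" using c divide_pos_neg[of "\<bar>c2\<bar> + 1" c1] by (simp add: t_def)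
  have nt: "norm (t *\<^sub>R b) = t" using b t by simp
  have "norm (G (t *\<^sub>R b)) \<le> c1 * norm (t *\<^sub>R b) + c2" using G by blast
  then have "norm (G (t *\<^sub>R b)) \<le> c1 * t + c2" unfolding nt .
  also have "c1 * t = - (\<bar>c2\<bar> + 1)" using c by (simp add: t_def)
  finally show False using norm_ge_zero[of "G (t *\<^sub>R b)"] by linarith
qed

lemma limit_right:
  fixes a l :: real and g :: "real \<Rightarrow> real"
  assumes h: "\<And>e. e > 0 \<Longrightarrow> a \<le> g e" and t: "(g \<longlongrightarrow> l) (at_right 0)"
  shows "a \<le> l"
proof (rule tendsto_lowerbound[OF t])
  show "\<forall>\<^sub>F x in at_right 0. a \<le> g x"
    by (rule eventually_at_rightI[of 0 1]) (auto intro: h)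
qed simp

lemma transfer_bound:
  fixes mu1 mu2 mu :: "'a::euclidean_space measure" and f :: "'a \<Rightarrow> 'b::euclidean_space"
    and psi :: "'a \<Rightarrow> real" and L c1 c2 :: real
  assumes p1: "prob_space mu1" and s1: "sets mu1 = sets borel"
    and p2: "prob_space mu2" and s2: "sets mu2 = sets borel"
    and pm: "prob_space mu" and sm: "sets mu = sets borel"
    and f: "f \<in> borel_measurable borel"
    and inj: "inj_on f (msupport mu1 \<union> msupport mu2)"
    and m1: "integrable mu1 (\<lambda>x. (norm (f x))\<^sup>2)" and m2: "integrable mu2 (\<lambda>x. (norm (f x))\<^sup>2)"
    and mm: "integrable mu (\<lambda>x. (norm (f x))\<^sup>2)"
    and r1: "regular c1 c2 (pushforward f mu1)" and r2: "regular c1 c2 (pushforward f mu2)"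
    and psi: "psi \<in> borel_measurable borel" "\<And>x. 0 \<le> psi x" "\<And>x. psi x \<le> L"
  shows "(\<integral>x. psi x \<partial>mu1) - (\<integral>x. psi x \<partial>mu2) \<le>
     L * sqrt (c1 * (sqrt (\<integral>x. (norm (f x))\<^sup>2 \<partial>mu1) + sqrt (\<integral>x. (norm (f x))\<^sup>2 \<partial>mu2)) + 2 * c2)
       * sqrt (sqrt (W2sq (pushforward f mu1) (pushforward f mu)) + sqrt (W2sq (pushforward f mu) (pushforward f mu2)))"
proof -
  define P1 where "P1 = pushforward f mu1"
  define P2 where "P2 = pushforward f mu2"
  define M where "M = pushforward f mu"
  have fm1: "f \<in> mu1 \<rightarrow>\<^sub>M borel" using f by (simp add: measurable_cong_sets[OF s1 refl])
  have fm2: "f \<in> mu2 \<rightarrow>\<^sub>M borel" using f by (simp add: measurable_cong_sets[OF s2 refl])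
  have fmm: "f \<in> mu \<rightarrow>\<^sub>M borel" using f by (simp add: measurable_cong_sets[OF sm refl])
  have n2m: "(\<lambda>y::'b. (norm y)\<^sup>2) \<in> borel_measurable borel" by measurable
  have pP1: "prob_space P1" unfolding P1_def pushforward_def by (rule prob_space.prob_space_distr[OF p1 fm1])
  have pP2: "prob_space P2" unfolding P2_def pushforward_def by (rule prob_space.prob_space_distr[OF p2 fm2])
  have pM: "prob_space M" unfolding M_def pushforward_def by (rule prob_space.prob_space_distr[OF pm fmm])
  have sP1: "sets P1 = sets borel" unfolding P1_def pushforward_def by simp
  have sP2: "sets P2 = sets borel" unfolding P2_def pushforward_def by simp
  have sM: "sets M = sets borel" unfolding M_def pushforward_def by simp
  have mP1: "integrable P1 (\<lambda>y. (norm y)\<^sup>2)"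
    unfolding P1_def pushforward_def using integrable_distr_eq[OF fm1 n2m] m1 by simp
  have mP2: "integrable P2 (\<lambda>y. (norm y)\<^sup>2)"
    unfolding P2_def pushforward_def using integrable_distr_eq[OF fm2 n2m] m2 by simp
  have mM: "integrable M (\<lambda>y. (norm y)\<^sup>2)"
    unfolding M_def pushforward_def using integrable_distr_eq[OF fmm n2m] mm by simp
  have aP1: "(\<integral>y. (norm y)\<^sup>2 \<partial>P1) = (\<integral>x. (norm (f x))\<^sup>2 \<partial>mu1)"
    unfolding P1_def pushforward_def using integral_distr[OF fm1 n2m] by simp
  have aP2: "(\<integral>y. (norm y)\<^sup>2 \<partial>P2) = (\<integral>x. (norm (f x))\<^sup>2 \<partial>mu2)"
    unfolding P2_def pushforward_def using integral_distr[OF fm2 n2m] by simp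
  obtain p Gp where p: "p \<in> borel_measurable borel" "\<And>x. p x > 0" "P1 = density lborel (\<lambda>x. ennreal (p x))"
      "\<And>x. ((\<lambda>y. log 2 (p y)) has_derivative (\<lambda>v. Gp x \<bullet> v)) (at x)" "\<And>x. norm (Gp x) \<le> c1 * norm x + c2"
    using reg_extract[OF r1[folded P1_def]] by blast
  obtain q Gq where q: "q \<in> borel_measurable borel" "\<And>x. q x > 0" "P2 = density lborel (\<lambda>x. ennreal (q x))"
      "\<And>x. ((\<lambda>y. log 2 (q y)) has_derivative (\<lambda>v. Gq x \<bullet> v)) (at x)" "\<And>x. norm (Gq x) \<le> c1 * norm x + c2"
    using reg_extract[OF r2[folded P2_def]] by blast
  have c1: "c1 \<ge> 0" by (rule reg_c1[OF r1])
  have c2: "c2 \<ge> 0" using p(5)[of 0] by (simp add: order_trans[OF norm_ge_zero])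
  have L0: "L \<ge> 0" using psi(2,3) order_trans by blast
  define K where "K = c1 * (sqrt (\<integral>x. (norm (f x))\<^sup>2 \<partial>mu1) + sqrt (\<integral>x. (norm (f x))\<^sup>2 \<partial>mu2)) + 2 * c2"
  have K0: "K \<ge> 0" unfolding K_def using c1 c2 by simp
  define J where "J = (\<integral>x. (p x - q x) * (ln (p x) - ln (q x)) \<partial>lborel)"
  define W1 where "W1 = W2sq P1 M"
  define W2 where "W2 = W2sq M P2"
  have W10: "W1 \<ge> 0" unfolding W1_def W2sq_def by simp
  have W20: "W2 \<ge> 0" unfolding W2_def W2sq_def by simp
  have core: "integrable lborel (\<lambda>x. (p x - q x) * (ln (p x) - ln (q x))) \<and>
      J \<le> K * (sqrt (W1 + e) + sqrt (W2 + e) + e)" if e: "e > 0" for e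
  proof -
    obtain \<Gamma> :: "(('b \<times> 'b) \<times> ('b \<times> 'b)) measure" where G: "prob_space \<Gamma>"
      "(\<lambda>\<omega>. fst (fst \<omega>)) \<in> \<Gamma> \<rightarrow>\<^sub>M borel" "(\<lambda>\<omega>. snd (snd \<omega>)) \<in> \<Gamma> \<rightarrow>\<^sub>M borel"
      "distr \<Gamma> borel (\<lambda>\<omega>. fst (fst \<omega>)) = P1" "distr \<Gamma> borel (\<lambda>\<omega>. snd (snd \<omega>)) = P2"
      "integrable \<Gamma> (\<lambda>\<omega>. (norm (fst (fst \<omega>) - snd (snd \<omega>)))\<^sup>2)"
      "sqrt (\<integral>\<omega>. (norm (fst (fst \<omega>) - snd (snd \<omega>)))\<^sup>2 \<partial>\<Gamma>) \<le> sqrt (W2sq P1 M + e) + sqrt (W2sq M P2 + e) + e"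
      using coupling_chain[OF pP1 sP1 pM sM pP2 sP2 mP1 mM mP2 e] by blast
    have Pp: "prob_space (density lborel (\<lambda>x. ennreal (p x)))" using pP1 p(3) by simp
    have Qp: "prob_space (density lborel (\<lambda>x. ennreal (q x)))" using pP2 q(3) by simp
    have mp: "integrable (density lborel (\<lambda>x. ennreal (p x))) (\<lambda>x. (norm x)\<^sup>2)" using mP1 p(3) by simp
    have mq: "integrable (density lborel (\<lambda>x. ennreal (q x))) (\<lambda>x. (norm x)\<^sup>2)" using mP2 q(3) by simp
    have dX: "distr \<Gamma> borel (\<lambda>\<omega>. fst (fst \<omega>)) = density lborel (\<lambda>x. ennreal (p x))" using G(4) p(3) by simp
    have dY: "distr \<Gamma> borel (\<lambda>\<omega>. snd (snd \<omega>)) = density lborel (\<lambda>x. ennreal (q x))" using G(5) q(3) by simp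
    note JB = J_bound[OF p(1) q(1) p(2) q(2) Pp Qp p(4) p(5) q(4) q(5) c1 mp mq G(1) G(2) G(3) dX dY G(6)]
    have "J \<le> K * sqrt (\<integral>\<omega>. (norm (fst (fst \<omega>) - snd (snd \<omega>)))\<^sup>2 \<partial>\<Gamma>)"
      using JB(2) p(3) q(3) aP1 aP2 unfolding J_def K_def by simp
    also have "\<dots> \<le> K * (sqrt (W1 + e) + sqrt (W2 + e) + e)"
      using G(7) K0 unfolding W1_def W2_def by (intro mult_left_mono) auto
    finally show ?thesis using JB(1) by simp
  qed
  have Jint: "integrable lborel (\<lambda>x. (p x - q x) * (ln (p x) - ln (q x)))" using core[of 1] by simp
  have sJ: "sqrt J \<le> sqrt K * sqrt (sqrt W1 + sqrt W2)"
  proof (rule limit_right)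
    fix e :: real assume e: "e > 0"
    have "sqrt J \<le> sqrt (K * (sqrt (W1 + e) + sqrt (W2 + e) + e))"
      using core[OF e] by (intro real_sqrt_le_mono) simp
    then show "sqrt J \<le> sqrt K * sqrt (sqrt (W1 + e) + sqrt (W2 + e) + e)"
      by (simp add: real_sqrt_mult)
  next
    have "((\<lambda>e. sqrt K * sqrt (sqrt (W1 + e) + sqrt (W2 + e) + e)) \<longlongrightarrow>
            sqrt K * sqrt (sqrt (W1 + 0) + sqrt (W2 + 0) + 0)) (at_right 0)"
      by (intro tendsto_intros)
    then show "((\<lambda>e. sqrt K * sqrt (sqrt (W1 + e) + sqrt (W2 + e) + e)) \<longlongrightarrow>
            sqrt K * sqrt (sqrt W1 + sqrt W2)) (at_right 0)" by simp
  qed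
  have hyp: "(\<integral>y. phi y \<partial>(distr mu1 borel f)) - (\<integral>y. phi y \<partial>(distr mu2 borel f))
      \<le> L * sqrt K * sqrt (sqrt W1 + sqrt W2)"
    if phim: "phi \<in> borel_measurable borel" and phi0: "\<And>y. 0 \<le> phi y" and phiL: "\<And>y. phi y \<le> L" for phi
  proof -
    have "(\<integral>y. phi y \<partial>(distr mu1 borel f)) - (\<integral>y. phi y \<partial>(distr mu2 borel f))
        = (\<integral>y. phi y \<partial>density lborel (\<lambda>x. ennreal (p x))) - (\<integral>y. phi y \<partial>density lborel (\<lambda>x. ennreal (q x)))"
      using p(3) q(3) unfolding P1_def P2_def pushforward_def by simp
    also have "\<dots> \<le> L * sqrt J"
      unfolding J_def
      by (rule density_tv[OF p(1) q(1) p(2) q(2) _ _ phim phi0 phiL Jint])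
         (use pP1 pP2 p(3) q(3) in simp_all)
    also have "\<dots> \<le> L * (sqrt K * sqrt (sqrt W1 + sqrt W2))" using sJ L0 by (rule mult_left_mono)
    finally show ?thesis by (simp add: mult.assoc)
  qed
  have "(\<integral>x. psi x \<partial>mu1) - (\<integral>x. psi x \<partial>mu2) \<le> L * sqrt K * sqrt (sqrt W1 + sqrt W2)"
    by (rule transfer[OF p1 p2 s1 s2 f inj psi hyp])
  then show ?thesis unfolding K_def W1_def W2_def P1_def P2_def M_def .
qed

lemma qroot: "(x::real) \<ge> 0 \<Longrightarrow> x powr (1/4) = sqrt (sqrt x)"
proof -
  assume x: "x \<ge> 0"
  have "x powr (1/4) = x powr ((1/2)/2)" by simp
  also have "\<dots> = sqrt (x powr (1/2))" by (rule powr_half_sqrt_powr[OF x])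
  also have "\<dots> = sqrt (sqrt x)" using x by (simp add: powr_half_sqrt)
  finally show ?thesis .
qed

lemma jensen_sqrt:
  fixes lam y :: "nat \<Rightarrow> real" and I :: "nat set"
  assumes "finite I" "I \<noteq> {}" "sum lam I = 1" "\<And>i. i \<in> I \<Longrightarrow> lam i \<ge> 0" "\<And>i. i \<in> I \<Longrightarrow> y i \<ge> 0"
  shows "(\<Sum>i\<in>I. lam i * sqrt (y i)) \<le> sqrt (\<Sum>i\<in>I. lam i * y i)"
proof -
  have "(\<Sum>i\<in>I. lam i *\<^sub>R sqrt (y i))\<^sup>2 \<le> (\<Sum>i\<in>I. lam i * (sqrt (y i))\<^sup>2)"
    by (rule convex_on_sum[OF assms(1,2) convex_power2 assms(3,4)]) auto
  also have "(\<Sum>i\<in>I. lam i * (sqrt (y i))\<^sup>2) = (\<Sum>i\<in>I. lam i * y i)"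
    by (rule sum.cong) (auto simp: assms(5))
  finally have "(\<Sum>i\<in>I. lam i * sqrt (y i))\<^sup>2 \<le> (\<Sum>i\<in>I. lam i * y i)" by simp
  then show ?thesis by (rule real_le_rsqrt)
qed

theorem corollary1:
  fixes loss :: "'y \<Rightarrow> 'y \<Rightarrow> real" and Y :: "'y measure" and L c1 c2 :: real
    and S :: nat and lam :: "nat \<Rightarrow> real"
    and mu_u :: "'a::euclidean_space measure" and f_u :: "'a \<Rightarrow> 'b::euclidean_space"
    and g_u :: "'b \<Rightarrow> 'y"
    and mu_s :: "nat \<Rightarrow> 'a measure" and f_s :: "nat \<Rightarrow> 'a \<Rightarrow> 'b" and g_s :: "nat \<Rightarrow> 'b \<Rightarrow> 'y"
    and f :: "'a \<Rightarrow> 'b" and g :: "'b \<Rightarrow> 'y" and mu :: "'a measure"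
  assumes loss_meas: "(\<lambda>z. loss (fst z) (snd z)) \<in> borel_measurable (Y \<Otimes>\<^sub>M Y)"
    and loss_nonneg: "\<And>a b. loss a b \<ge> 0"
    and loss_sym: "\<And>a b. loss a b = loss b a"
    and L_pos: "L > 0"
    and loss_bdd: "\<And>a b. loss a b \<le> L"
    and loss_tri: "\<And>a b c. loss a c \<le> loss a b + loss b c"
    \<comment> \<open>domains\<close>
    and mu_u_prob: "prob_space mu_u" and mu_u_sets: "sets mu_u = sets borel"
    and mu_s_prob: "\<And>s. s \<in> {1..S} \<Longrightarrow> prob_space (mu_s s)"
    and mu_s_sets: "\<And>s. s \<in> {1..S} \<Longrightarrow> sets (mu_s s) = sets borel"
    and f_u_meas: "f_u \<in> borel_measurable borel" and g_u_meas: "g_u \<in> measurable borel Y"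
    and f_s_meas: "\<And>s. s \<in> {1..S} \<Longrightarrow> f_s s \<in> borel_measurable borel"
    and g_s_meas: "\<And>s. s \<in> {1..S} \<Longrightarrow> g_s s \<in> measurable borel Y"
    \<comment> \<open>hypothesis h = g o f and arbitrary input distribution mu\<close>
    and f_meas: "f \<in> borel_measurable borel" and g_meas: "g \<in> measurable borel Y"
    and mu_prob: "prob_space mu" and mu_sets: "sets mu = sets borel"
    \<comment> \<open>finite second moments of the representations\<close>
    and mom_u: "integrable mu_u (\<lambda>x. (norm (f x))\<^sup>2)"
    and mom_s: "\<And>s. s \<in> {1..S} \<Longrightarrow> integrable (mu_s s) (\<lambda>x. (norm (f x))\<^sup>2)"
    and mom_mu: "integrable mu (\<lambda>x. (norm (f x))\<^sup>2)"
    \<comment> \<open>(ii) f invertible on the data manifold\<close>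
    and f_inj: "inj_on f (msupport mu_u \<union> (\<Union>s\<in>{1..S}. msupport (mu_s s)))"
    \<comment> \<open>(iii) regularity of the pushforwards\<close>
    and reg_u: "regular c1 c2 (pushforward f mu_u)"
    and reg_s: "\<And>s. s \<in> {1..S} \<Longrightarrow> regular c1 c2 (pushforward f (mu_s s))"
    \<comment> \<open>convex weights\<close>
    and lam_nonneg: "\<And>s. s \<in> {1..S} \<Longrightarrow> lam s \<ge> 0"
    and lam_sum: "(\<Sum>s\<in>{1..S}. lam s) = 1"
  shows
    "let h = g \<circ> f; h_u = g_u \<circ> f_u; h_s = (\<lambda>s. g_s s \<circ> f_s s);
         sigma = (\<lambda>s. min (\<integral>x. loss (h_u x) (h_s s x) \<partial>mu_u) (\<integral>x. loss (h_u x) (h_s s x) \<partial>(mu_s s)));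
         C = Max ((\<lambda>s. sqrt (c1 * (sqrt (\<integral>x. (norm (f x))\<^sup>2 \<partial>mu_u)
                                   + sqrt (\<integral>x. (norm (f x))\<^sup>2 \<partial>(mu_s s))) + 2 * c2)) ` {1..S})
     in risk loss mu_u h_u h
        \<le> (\<Sum>s\<in>{1..S}. lam s * risk loss (mu_s s) (h_s s) h)
          + L * C * (\<Sum>s\<in>{1..S}. lam s * W2sq (pushforward f mu) (pushforward f (mu_s s))) powr (1/4)
          + L * C * (W2sq (pushforward f mu_u) (pushforward f mu)) powr (1/4)
          + (\<Sum>s\<in>{1..S}. lam s * sigma s)"
proof -
  define Ru where "Ru = (\<integral>x. loss (g (f x)) (g_u (f_u x)) \<partial>mu_u)"
  define Rs where "Rs s = (\<integral>x. loss (g (f x)) (g_s s (f_s s x)) \<partial>(mu_s s))" for s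
  define Eu where "Eu s = (\<integral>x. loss (g_u (f_u x)) (g_s s (f_s s x)) \<partial>mu_u)" for s
  define Es where "Es s = (\<integral>x. loss (g_u (f_u x)) (g_s s (f_s s x)) \<partial>(mu_s s))" for s
  define Cs where "Cs s = sqrt (c1 * (sqrt (\<integral>x. (norm (f x))\<^sup>2 \<partial>mu_u)
                                   + sqrt (\<integral>x. (norm (f x))\<^sup>2 \<partial>(mu_s s))) + 2 * c2)" for s
  define C where "C = Max (Cs ` {1..S})"
  define Wu where "Wu = W2sq (pushforward f mu_u) (pushforward f mu)"
  define Ws where "Ws s = W2sq (pushforward f mu) (pushforward f (mu_s s))" for s
  have fin: "finite {1..S}" by simp
  have Sne: "{1..S} \<noteq> {}"
  proof
    assume "{1..S} = {}"
    then have "(\<Sum>s\<in>{1..S}. lam s) = 0" by (simp only: sum.empty)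
    then show False using lam_sum by simp
  qed
  have L0: "L \<ge> 0" using L_pos by simp
  have c1: "c1 \<ge> 0" by (rule reg_c1[OF reg_u])
  have c2: "c2 \<ge> 0"
  proof -
    obtain p and G :: "'b \<Rightarrow> 'b" where G: "\<forall>x. norm (G x) \<le> c1 * norm x + c2"
      using reg_extract[OF reg_u] by blast
    have "norm (G 0) \<le> c1 * norm (0::'b) + c2" using G by blast
    then show ?thesis by (simp add: order_trans[OF norm_ge_zero])
  qed
  have Cs0: "Cs s \<ge> 0" for s unfolding Cs_def using c1 c2 by simp
  have CsC: "Cs s \<le> C" if "s \<in> {1..S}" for s unfolding C_def using fin that by (intro Max_ge) auto
  have C0: "C \<ge> 0" using Sne CsC Cs0 by (meson all_not_in_conv order_trans)
  have Wu0: "Wu \<ge> 0" unfolding Wu_def W2sq_def by simp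
  have Ws0: "Ws s \<ge> 0" for s unfolding Ws_def W2sq_def by simp
  have lm: "(\<lambda>x. loss (a x) (b x)) \<in> borel_measurable borel"
    if a: "a \<in> borel \<rightarrow>\<^sub>M Y" and b: "b \<in> borel \<rightarrow>\<^sub>M Y" for a b :: "'a \<Rightarrow> 'y"
    using measurable_compose[OF measurable_Pair[OF a b] loss_meas] by simp
  have hm: "(\<lambda>x. g (f x)) \<in> borel \<rightarrow>\<^sub>M Y" by (rule measurable_compose[OF f_meas g_meas])
  have hum: "(\<lambda>x. g_u (f_u x)) \<in> borel \<rightarrow>\<^sub>M Y" by (rule measurable_compose[OF f_u_meas g_u_meas])
  have hsm: "(\<lambda>x. g_s s (f_s s x)) \<in> borel \<rightarrow>\<^sub>M Y" if "s \<in> {1..S}" for s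
    by (rule measurable_compose[OF f_s_meas[OF that] g_s_meas[OF that]])
  have per: "Ru \<le> Rs s + L * C * (Wu powr (1/4) + Ws s powr (1/4)) + min (Eu s) (Es s)"
    if s: "s \<in> {1..S}" for s
  proof -
    interpret U: prob_space mu_u by (rule mu_u_prob)
    interpret V: prob_space "mu_s s" by (rule mu_s_prob[OF s])
    define psi1 where "psi1 x = loss (g (f x)) (g_s s (f_s s x))" for x
    define psi2 where "psi2 x = loss (g (f x)) (g_u (f_u x))" for x
    define psi3 where "psi3 x = loss (g_u (f_u x)) (g_s s (f_s s x))" for x
    have m1: "psi1 \<in> borel_measurable borel" unfolding psi1_def by (rule lm[OF hm hsm[OF s]])
    have m2: "psi2 \<in> borel_measurable borel" unfolding psi2_def by (rule lm[OF hm hum])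
    have m3: "psi3 \<in> borel_measurable borel" unfolding psi3_def by (rule lm[OF hum hsm[OF s]])
    have bU: "borel_measurable mu_u = borel_measurable borel" by (rule measurable_cong_sets[OF mu_u_sets refl])
    have bV: "borel_measurable (mu_s s) = borel_measurable borel" by (rule measurable_cong_sets[OF mu_s_sets[OF s] refl])
    have intU: "integrable mu_u psi" if "psi \<in> borel_measurable borel" "\<And>x. 0 \<le> psi x" "\<And>x. psi x \<le> L"
      for psi :: "'a \<Rightarrow> real"
      by (rule U.integrable_const_bound[of _ L]) (use that bU in auto)
    have intV: "integrable (mu_s s) psi" if "psi \<in> borel_measurable borel" "\<And>x. 0 \<le> psi x" "\<And>x. psi x \<le> L"
      for psi :: "'a \<Rightarrow> real"
      by (rule V.integrable_const_bound[of _ L]) (use that bV in auto)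
    have b1: "\<And>x. 0 \<le> psi1 x" "\<And>x. psi1 x \<le> L" unfolding psi1_def using loss_nonneg loss_bdd by auto
    have b2: "\<And>x. 0 \<le> psi2 x" "\<And>x. psi2 x \<le> L" unfolding psi2_def using loss_nonneg loss_bdd by auto
    have b3: "\<And>x. 0 \<le> psi3 x" "\<And>x. psi3 x \<le> L" unfolding psi3_def using loss_nonneg loss_bdd by auto
    have i1U: "integrable mu_u psi1" by (rule intU[OF m1 b1])
    have i2U: "integrable mu_u psi2" by (rule intU[OF m2 b2])
    have i3U: "integrable mu_u psi3" by (rule intU[OF m3 b3])
    have i1V: "integrable (mu_s s) psi1" by (rule intV[OF m1 b1])
    have i2V: "integrable (mu_s s) psi2" by (rule intV[OF m2 b2])
    have i3V: "integrable (mu_s s) psi3" by (rule intV[OF m3 b3])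
    have inj: "inj_on f (msupport mu_u \<union> msupport (mu_s s))"
      by (rule inj_on_subset[OF f_inj]) (use s in auto)
    define B where "B = L * Cs s * sqrt (sqrt Wu + sqrt (Ws s))"
    have T1: "(\<integral>x. psi1 x \<partial>mu_u) - (\<integral>x. psi1 x \<partial>(mu_s s)) \<le> B"
      unfolding B_def Cs_def Wu_def Ws_def
      by (rule transfer_bound[OF mu_u_prob mu_u_sets mu_s_prob[OF s] mu_s_sets[OF s] mu_prob mu_sets
            f_meas inj mom_u mom_s[OF s] mom_mu reg_u reg_s[OF s] m1 b1])
    have T2: "(\<integral>x. psi2 x \<partial>mu_u) - (\<integral>x. psi2 x \<partial>(mu_s s)) \<le> B"
      unfolding B_def Cs_def Wu_def Ws_def
      by (rule transfer_bound[OF mu_u_prob mu_u_sets mu_s_prob[OF s] mu_s_sets[OF s] mu_prob mu_sets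
            f_meas inj mom_u mom_s[OF s] mom_mu reg_u reg_s[OF s] m2 b2])
    have BB: "B \<le> L * C * (Wu powr (1/4) + Ws s powr (1/4))"
    proof -
      have "sqrt (sqrt Wu + sqrt (Ws s)) \<le> sqrt (sqrt Wu) + sqrt (sqrt (Ws s))"
        by (rule sqrt_add_le_add_sqrt) (use Wu0 Ws0 in auto)
      also have "\<dots> = Wu powr (1/4) + Ws s powr (1/4)" using Wu0 Ws0[of s] by (simp add: qroot)
      finally have a: "sqrt (sqrt Wu + sqrt (Ws s)) \<le> Wu powr (1/4) + Ws s powr (1/4)" .
      have b: "L * Cs s \<le> L * C" using CsC[OF s] L0 by (rule mult_left_mono)
      show ?thesis unfolding B_def
        by (rule mult_mono[OF b a]) (use L0 C0 Wu0 Ws0[of s] in auto)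
    qed
    have tri: "psi2 x \<le> psi1 x + psi3 x" for x
      unfolding psi1_def psi2_def psi3_def
      using loss_tri[of "g (f x)" "g_u (f_u x)" "g_s s (f_s s x)"] loss_sym[of "g_s s (f_s s x)" "g_u (f_u x)"]
      by simp
    have Ru2: "Ru = (\<integral>x. psi2 x \<partial>mu_u)" unfolding Ru_def psi2_def ..
    have Rs1: "Rs s = (\<integral>x. psi1 x \<partial>(mu_s s))" unfolding Rs_def psi1_def ..
    have Eu3: "Eu s = (\<integral>x. psi3 x \<partial>mu_u)" unfolding Eu_def psi3_def ..
    have Es3: "Es s = (\<integral>x. psi3 x \<partial>(mu_s s))" unfolding Es_def psi3_def ..
    have A: "Ru \<le> Rs s + B + Eu s"
    proof -
      have "(\<integral>x. psi2 x \<partial>mu_u) \<le> (\<integral>x. psi1 x + psi3 x \<partial>mu_u)"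
        by (rule integral_mono[OF i2U]) (use i1U i3U tri in auto)
      also have "\<dots> = (\<integral>x. psi1 x \<partial>mu_u) + (\<integral>x. psi3 x \<partial>mu_u)" using i1U i3U by simp
      finally show ?thesis using T1 Ru2 Rs1 Eu3 by linarith
    qed
    have B': "Ru \<le> Rs s + B + Es s"
    proof -
      have "(\<integral>x. psi2 x \<partial>(mu_s s)) \<le> (\<integral>x. psi1 x + psi3 x \<partial>(mu_s s))"
        by (rule integral_mono[OF i2V]) (use i1V i3V tri in auto)
      also have "\<dots> = (\<integral>x. psi1 x \<partial>(mu_s s)) + (\<integral>x. psi3 x \<partial>(mu_s s))" using i1V i3V by simp
      finally show ?thesis using T2 Ru2 Rs1 Es3 by linarith
    qed
    have "Ru \<le> Rs s + B + min (Eu s) (Es s)" using A B' by linarith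
    then show ?thesis using BB by linarith
  qed
  define Q where "Q s = Ws s powr (1/4)" for s
  have jen: "(\<Sum>s\<in>{1..S}. lam s * Q s) \<le> (\<Sum>s\<in>{1..S}. lam s * Ws s) powr (1/4)"
  proof -
    have "(\<Sum>s\<in>{1..S}. lam s * Q s) = (\<Sum>s\<in>{1..S}. lam s * sqrt (sqrt (Ws s)))"
      unfolding Q_def using Ws0 by (simp add: qroot)
    also have "\<dots> \<le> sqrt (\<Sum>s\<in>{1..S}. lam s * sqrt (Ws s))"
      using jensen_sqrt[OF fin Sne lam_sum lam_nonneg, where y = "\<lambda>s. sqrt (Ws s)"] Ws0 by simp
    also have "\<dots> \<le> sqrt (sqrt (\<Sum>s\<in>{1..S}. lam s * Ws s))"
      by (rule real_sqrt_le_mono) (use jensen_sqrt[OF fin Sne lam_sum lam_nonneg, where y = Ws] Ws0 in simp)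
    also have "\<dots> = (\<Sum>s\<in>{1..S}. lam s * Ws s) powr (1/4)"
      using lam_nonneg Ws0 by (subst qroot) (auto intro: sum_nonneg)
    finally show ?thesis .
  qed
  have "Ru = (\<Sum>s\<in>{1..S}. lam s * Ru)" using lam_sum by (simp add: sum_distrib_right[symmetric])
  also have "\<dots> \<le> (\<Sum>s\<in>{1..S}. lam s * (Rs s + L * C * (Wu powr (1/4) + Q s) + min (Eu s) (Es s)))"
    by (rule sum_mono) (use per lam_nonneg in \<open>auto intro: mult_left_mono simp: Q_def\<close>)
  also have "\<dots> = (\<Sum>s\<in>{1..S}. lam s * Rs s) + L * C * Wu powr (1/4) * (\<Sum>s\<in>{1..S}. lam s)
       + L * C * (\<Sum>s\<in>{1..S}. lam s * Q s) + (\<Sum>s\<in>{1..S}. lam s * min (Eu s) (Es s))"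
    by (simp add: distrib_left sum.distrib sum_distrib_left sum_distrib_right mult_ac)
  also have "\<dots> \<le> (\<Sum>s\<in>{1..S}. lam s * Rs s) + L * C * Wu powr (1/4)
       + L * C * (\<Sum>s\<in>{1..S}. lam s * Ws s) powr (1/4) + (\<Sum>s\<in>{1..S}. lam s * min (Eu s) (Es s))"
    using jen lam_sum L0 C0 by (simp add: mult_left_mono mult_nonneg_nonneg)
  finally have final: "Ru \<le> (\<Sum>s\<in>{1..S}. lam s * Rs s) + L * C * (\<Sum>s\<in>{1..S}. lam s * Ws s) powr (1/4)
       + L * C * Wu powr (1/4) + (\<Sum>s\<in>{1..S}. lam s * min (Eu s) (Es s))" by linarith
  show ?thesis
    unfolding Let_def risk_def comp_def
    using final unfolding Ru_def Rs_def Eu_def Es_def C_def Cs_def Wu_def Ws_def .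
qed

end
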